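(* Let $A$ be a finite-vertex graph and $\mathsf V$ a pseudovariety of semigroups containing $B_2$. Let $\gamma\colon\overline{\Omega}_A g\mathsf V\to\overline{\Omega}_{E(A)}\mathsf V$ be the unique continuous homomorphism extending the graph morphism $A\to E(A)$ that collapses all vertices to the single vertex and is the identity on $E(A)$. Then: (1) $\gamma(E(\overline{\Omega}_A g\mathsf V))$ is an open factorial subset of $\overline{\Omega}_{E(A)}\mathsf V$; (2) $\gamma$ is an open mapping whose restriction to $E(\overline{\Omega}_A g\mathsf V)$ is a topological embedding; (3) for all edges $x,y,z$ of $\overline{\Omega}_A g\mathsf V$, if $\gamma(x)\gamma(y)=\gamma(z)$ then $(x,y)\in D(\overline{\Omega}_A g\mathsf V)$ and $xy=z$.
   Context: A graph $A$ has vertices $V(A)$, edges $E(A)$, source/range maps $\alpha,\omega$; finite-vertex means $V(A)$ finite; a set is viewed as a one-vertex graph. A semigroupoid has associative partial multiplication defined on $D(S)=\{(s,t)\in E(S)^2:\alpha(s)=\omega(t)\}$. $g\mathsf V$ is the smallest pseudovariety of semigroupoids containing the pseudovariety of semigroups $\mathsf V$; $\overline{\Omega}_A g\mathsf V$ is the free pro-$g\mathsf V$ semigroupoid over $A$, $\overline{\Omega}_{E(A)}\mathsf V$ the free pro-$\mathsf V$ semigroup over $E(A)$. $B_2$ is the aperiodic Brandt semigroup $(Q\times Q)\cup\{0\}$, $|Q|=2$, with $(p,r)(r,q)=(p,q)$ and all other products $0$. A subset $F$ of a semigroup is factorial if $xy\in F$ implies $x,y\in F$. *)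

theory Defs
  imports "HOL-Analysis.Analysis"
begin

text \<open>A graph: vertices, edges, source map alpha (gsrc) and range map omega (gtgt).\<close>
record ('v, 'e) graph =
  gverts :: "'v set"
  gedges :: "'e set"
  gsrc   :: "'e \<Rightarrow> 'v"
  gtgt   :: "'e \<Rightarrow> 'v"

definition is_graph :: "('v, 'e) graph \<Rightarrow> bool" where
  "is_graph A \<longleftrightarrow> (\<forall>e\<in>gedges A. gsrc A e \<in> gverts A \<and> gtgt A e \<in> gverts A)"

record fsg =
  sg_car :: "nat set"
  sg_mul :: "nat \<Rightarrow> nat \<Rightarrow> nat"

definition fin_sg :: "fsg \<Rightarrow> bool" where
  "fin_sg S \<longleftrightarrow> finite (sg_car S) \<and> sg_car S \<noteq> {} \<and>
     (\<forall>x\<in>sg_car S. \<forall>y\<in>sg_car S. sg_mul S x y \<in> sg_car S) \<and>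
     (\<forall>x\<in>sg_car S. \<forall>y\<in>sg_car S. \<forall>z\<in>sg_car S.
        sg_mul S (sg_mul S x y) z = sg_mul S x (sg_mul S y z))"

definition sg_hom :: "fsg \<Rightarrow> fsg \<Rightarrow> (nat \<Rightarrow> nat) \<Rightarrow> bool" where
  "sg_hom S T h \<longleftrightarrow> h \<in> sg_car S \<rightarrow> sg_car T \<and>
     (\<forall>x\<in>sg_car S. \<forall>y\<in>sg_car S. h (sg_mul S x y) = sg_mul T (h x) (h y))"

definition sg_prod :: "fsg \<Rightarrow> fsg \<Rightarrow> fsg" where
  "sg_prod S T = \<lparr> sg_car = prod_encode ` (sg_car S \<times> sg_car T),
     sg_mul = (\<lambda>a b. prod_encode (sg_mul S (fst (prod_decode a)) (fst (prod_decode b)),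
                                  sg_mul T (snd (prod_decode a)) (snd (prod_decode b)))) \<rparr>"

definition pv_sg :: "fsg set \<Rightarrow> bool" where
  "pv_sg V \<longleftrightarrow> (\<forall>S\<in>V. fin_sg S) \<and>
     (\<forall>S\<in>V. \<forall>C. C \<subseteq> sg_car S \<and> C \<noteq> {} \<and> (\<forall>x\<in>C. \<forall>y\<in>C. sg_mul S x y \<in> C)
          \<longrightarrow> \<lparr> sg_car = C, sg_mul = sg_mul S \<rparr> \<in> V) \<and>
     (\<forall>S\<in>V. \<forall>T h. fin_sg T \<and> sg_hom S T h \<and> h ` sg_car S = sg_car T \<longrightarrow> T \<in> V) \<and>
     (\<forall>S\<in>V. \<forall>T\<in>V. sg_prod S T \<in> V)"

text \<open>The aperiodic Brandt semigroup B2 with Q = {0,1}: 0 is the zero, and the pair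
  (p,q) is encoded as 1 + 2p + q; (p,r)(r,q) = (p,q), all other products are 0.\<close>
definition B2 :: fsg where
  "B2 = \<lparr> sg_car = {0,1,2,3,4},
     sg_mul = (\<lambda>a b. if a \<noteq> 0 \<and> b \<noteq> 0 \<and> (a - 1) mod 2 = (b - 1) div 2
                     then 1 + 2 * ((a - 1) div 2) + (b - 1) mod 2 else 0) \<rparr>"

text \<open>The product s t is defined iff sd_src s = sd_tgt t (alpha(s) = omega(t)).\<close>
record fsgd =
  sd_V   :: "nat set"
  sd_E   :: "nat set"
  sd_src :: "nat \<Rightarrow> nat"
  sd_tgt :: "nat \<Rightarrow> nat"
  sd_mul :: "nat \<Rightarrow> nat \<Rightarrow> nat"

definition fin_sgd :: "fsgd \<Rightarrow> bool" where
  "fin_sgd S \<longleftrightarrow> finite (sd_V S) \<and> finite (sd_E S) \<and>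
     (\<forall>s\<in>sd_E S. sd_src S s \<in> sd_V S \<and> sd_tgt S s \<in> sd_V S) \<and>
     (\<forall>s\<in>sd_E S. \<forall>t\<in>sd_E S. sd_src S s = sd_tgt S t \<longrightarrow>
        sd_mul S s t \<in> sd_E S \<and> sd_src S (sd_mul S s t) = sd_src S t \<and>
        sd_tgt S (sd_mul S s t) = sd_tgt S s) \<and>
     (\<forall>s\<in>sd_E S. \<forall>t\<in>sd_E S. \<forall>r\<in>sd_E S.
        sd_src S s = sd_tgt S t \<and> sd_src S t = sd_tgt S r \<longrightarrow>
        sd_mul S (sd_mul S s t) r = sd_mul S s (sd_mul S t r))"

definition sgd_morph :: "fsgd \<Rightarrow> fsgd \<Rightarrow> (nat \<Rightarrow> nat) \<Rightarrow> (nat \<Rightarrow> nat) \<Rightarrow> bool" where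
  "sgd_morph S T hv he \<longleftrightarrow> hv \<in> sd_V S \<rightarrow> sd_V T \<and> he \<in> sd_E S \<rightarrow> sd_E T \<and>
     (\<forall>s\<in>sd_E S. sd_src T (he s) = hv (sd_src S s) \<and> sd_tgt T (he s) = hv (sd_tgt S s)) \<and>
     (\<forall>s\<in>sd_E S. \<forall>t\<in>sd_E S. sd_src S s = sd_tgt S t \<longrightarrow>
        he (sd_mul S s t) = sd_mul T (he s) (he t))"

text \<open>Division (Tilson): S divides T iff there is a finite semigroupoid R with a quotient
  morphism R -> S (bijective on vertices, surjective on edges, hence full) and a
  faithful morphism R -> T (injective on each hom-set).\<close>
definition sgd_divides :: "fsgd \<Rightarrow> fsgd \<Rightarrow> bool" where
  "sgd_divides S T \<longleftrightarrow> (\<exists>R qv qe fv fe. fin_sgd R \<and>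
     sgd_morph R S qv qe \<and> bij_betw qv (sd_V R) (sd_V S) \<and> qe ` sd_E R = sd_E S \<and>
     sgd_morph R T fv fe \<and>
     (\<forall>r\<in>sd_E R. \<forall>r'\<in>sd_E R. sd_src R r = sd_src R r' \<and> sd_tgt R r = sd_tgt R r' \<and>
          fe r = fe r' \<longrightarrow> r = r'))"

definition sgd_prod :: "fsgd \<Rightarrow> fsgd \<Rightarrow> fsgd" where
  "sgd_prod S T = \<lparr> sd_V = prod_encode ` (sd_V S \<times> sd_V T),
     sd_E = prod_encode ` (sd_E S \<times> sd_E T),
     sd_src = (\<lambda>a. prod_encode (sd_src S (fst (prod_decode a)), sd_src T (snd (prod_decode a)))),
     sd_tgt = (\<lambda>a. prod_encode (sd_tgt S (fst (prod_decode a)), sd_tgt T (snd (prod_decode a)))),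
     sd_mul = (\<lambda>a b. prod_encode (sd_mul S (fst (prod_decode a)) (fst (prod_decode b)),
                                  sd_mul T (snd (prod_decode a)) (snd (prod_decode b)))) \<rparr>"

definition sgd_coprod :: "fsgd \<Rightarrow> fsgd \<Rightarrow> fsgd" where
  "sgd_coprod S T = \<lparr> sd_V = (\<lambda>n. 2 * n) ` sd_V S \<union> (\<lambda>n. 2 * n + 1) ` sd_V T,
     sd_E = (\<lambda>n. 2 * n) ` sd_E S \<union> (\<lambda>n. 2 * n + 1) ` sd_E T,
     sd_src = (\<lambda>a. if even a then 2 * sd_src S (a div 2) else 2 * sd_src T (a div 2) + 1),
     sd_tgt = (\<lambda>a. if even a then 2 * sd_tgt S (a div 2) else 2 * sd_tgt T (a div 2) + 1),
     sd_mul = (\<lambda>a b. if even a then 2 * sd_mul S (a div 2) (b div 2)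
                     else 2 * sd_mul T (a div 2) (b div 2) + 1) \<rparr>"

definition pv_sgd :: "fsgd set \<Rightarrow> bool" where
  "pv_sgd C \<longleftrightarrow> (\<forall>S\<in>C. fin_sgd S) \<and>
     (\<forall>S T. T \<in> C \<and> fin_sgd S \<and> sgd_divides S T \<longrightarrow> S \<in> C) \<and>
     (\<forall>S\<in>C. \<forall>T\<in>C. sgd_prod S T \<in> C) \<and>
     (\<forall>S\<in>C. \<forall>T\<in>C. sgd_coprod S T \<in> C)"

definition sg_as_sgd :: "fsg \<Rightarrow> fsgd" where
  "sg_as_sgd S = \<lparr> sd_V = {0}, sd_E = sg_car S, sd_src = (\<lambda>_. 0), sd_tgt = (\<lambda>_. 0),
     sd_mul = sg_mul S \<rparr>"

definition gV :: "fsg set \<Rightarrow> fsgd set" where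
  "gV V = {S. \<forall>C. pv_sgd C \<and> sg_as_sgd ` V \<subseteq> C \<longrightarrow> S \<in> C}"

section \<open>Free pro-V semigroup over a set X (as compatible families / projective limit)\<close>

definition idxV :: "fsg set \<Rightarrow> 'x set \<Rightarrow> (fsg \<times> ('x \<Rightarrow> nat)) set" where
  "idxV V X = {(S, \<phi>). S \<in> V \<and> \<phi> \<in> PiE X (\<lambda>_. sg_car S)}"

definition OmegaV :: "fsg set \<Rightarrow> 'x set \<Rightarrow> ((fsg \<times> ('x \<Rightarrow> nat)) \<Rightarrow> nat) set" where
  "OmegaV V X = {\<pi> \<in> PiE (idxV V X) (\<lambda>i. sg_car (fst i)).
     \<forall>S \<phi> T \<psi> h. (S, \<phi>) \<in> idxV V X \<and> (T, \<psi>) \<in> idxV V X \<and> sg_hom S T h \<and>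
        (\<forall>x\<in>X. h (\<phi> x) = \<psi> x) \<longrightarrow> h (\<pi> (S, \<phi>)) = \<pi> (T, \<psi>)}"

definition topV :: "fsg set \<Rightarrow> 'x set \<Rightarrow> ((fsg \<times> ('x \<Rightarrow> nat)) \<Rightarrow> nat) topology" where
  "topV V X = subtopology (product_topology (\<lambda>i. discrete_topology (sg_car (fst i))) (idxV V X))
                          (OmegaV V X)"

definition mulV :: "fsg set \<Rightarrow> 'x set \<Rightarrow> ((fsg \<times> ('x \<Rightarrow> nat)) \<Rightarrow> nat)
                    \<Rightarrow> ((fsg \<times> ('x \<Rightarrow> nat)) \<Rightarrow> nat) \<Rightarrow> ((fsg \<times> ('x \<Rightarrow> nat)) \<Rightarrow> nat)" where
  "mulV V X \<pi> \<rho> = restrict (\<lambda>i. sg_mul (fst i) (\<pi> i) (\<rho> i)) (idxV V X)"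

definition genV :: "fsg set \<Rightarrow> 'x set \<Rightarrow> 'x \<Rightarrow> ((fsg \<times> ('x \<Rightarrow> nat)) \<Rightarrow> nat)" where
  "genV V X x = restrict (\<lambda>i. snd i x) (idxV V X)"

section \<open>Free pro-C semigroupoid over a graph A (as compatible families)\<close>

type_synonym ('v, 'e) sidx = "fsgd \<times> ('v \<Rightarrow> nat) \<times> ('e \<Rightarrow> nat)"
text \<open>An edge of the free pro-C semigroupoid: (alpha, omega, family).\<close>
type_synonym ('v, 'e) fedge = "'v \<times> 'v \<times> (('v, 'e) sidx \<Rightarrow> nat)"

definition idxG :: "fsgd set \<Rightarrow> ('v, 'e) graph \<Rightarrow> ('v, 'e) sidx set" where
  "idxG C A = {(S, \<phi>v, \<phi>e). S \<in> C \<and> \<phi>v \<in> PiE (gverts A) (\<lambda>_. sd_V S) \<and>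
      \<phi>e \<in> PiE (gedges A) (\<lambda>_. sd_E S) \<and>
      (\<forall>e\<in>gedges A. sd_src S (\<phi>e e) = \<phi>v (gsrc A e) \<and> sd_tgt S (\<phi>e e) = \<phi>v (gtgt A e))}"

definition EdgesG :: "fsgd set \<Rightarrow> ('v, 'e) graph \<Rightarrow> ('v, 'e) fedge set" where
  "EdgesG C A = {(u, v, \<pi>). u \<in> gverts A \<and> v \<in> gverts A \<and>
      \<pi> \<in> PiE (idxG C A) (\<lambda>i. sd_E (fst i)) \<and>
      (\<forall>S \<phi>v \<phi>e. (S, \<phi>v, \<phi>e) \<in> idxG C A \<longrightarrow>
          sd_src S (\<pi> (S, \<phi>v, \<phi>e)) = \<phi>v u \<and> sd_tgt S (\<pi> (S, \<phi>v, \<phi>e)) = \<phi>v v) \<and>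
      (\<forall>S \<phi>v \<phi>e T \<psi>v \<psi>e hv he. (S, \<phi>v, \<phi>e) \<in> idxG C A \<and> (T, \<psi>v, \<psi>e) \<in> idxG C A \<and>
          sgd_morph S T hv he \<and> (\<forall>x\<in>gverts A. hv (\<phi>v x) = \<psi>v x) \<and>
          (\<forall>e\<in>gedges A. he (\<phi>e e) = \<psi>e e) \<longrightarrow>
          he (\<pi> (S, \<phi>v, \<phi>e)) = \<pi> (T, \<psi>v, \<psi>e))}"

definition e_src :: "('v, 'e) fedge \<Rightarrow> 'v" where "e_src x = fst x"
definition e_tgt :: "('v, 'e) fedge \<Rightarrow> 'v" where "e_tgt x = fst (snd x)"

text \<open>(x,y) in D iff alpha(x) = omega(y); then alpha(xy) = alpha(y), omega(xy) = omega(x).\<close>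
definition mulG :: "fsgd set \<Rightarrow> ('v, 'e) graph \<Rightarrow> ('v, 'e) fedge \<Rightarrow> ('v, 'e) fedge \<Rightarrow> ('v, 'e) fedge" where
  "mulG C A x y = (e_src y, e_tgt x,
      restrict (\<lambda>i. sd_mul (fst i) (snd (snd x) i) (snd (snd y) i)) (idxG C A))"

definition genG :: "fsgd set \<Rightarrow> ('v, 'e) graph \<Rightarrow> 'e \<Rightarrow> ('v, 'e) fedge" where
  "genG C A e = (gsrc A e, gtgt A e, restrict (\<lambda>i. snd (snd i) e) (idxG C A))"

definition topG :: "fsgd set \<Rightarrow> ('v, 'e) graph \<Rightarrow> ('v, 'e) fedge topology" where
  "topG C A = subtopology
     (prod_topology (discrete_topology (gverts A))
       (prod_topology (discrete_topology (gverts A))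
         (product_topology (\<lambda>i. discrete_topology (sd_E (fst i))) (idxG C A))))
     (EdgesG C A)"

definition factorial_in :: "('a \<Rightarrow> 'a \<Rightarrow> 'a) \<Rightarrow> 'a set \<Rightarrow> 'a set \<Rightarrow> bool" where
  "factorial_in mul S F \<longleftrightarrow> F \<subseteq> S \<and> (\<forall>x\<in>S. \<forall>y\<in>S. mul x y \<in> F \<longrightarrow> x \<in> F \<and> y \<in> F)"

end

theory Submission
  imports Defs "HOL-Library.Countable_Set"
begin

definition cd :: "fsgd \<Rightarrow> fsg" where
 "cd S = \<lparr>sg_car = insert 0 (Suc ` sd_E S),
    sg_mul = (\<lambda>a b. if a \<noteq> 0 \<and> b \<noteq> 0 \<and> sd_src S (a - 1) = sd_tgt S (b - 1)
                    then Suc (sd_mul S (a - 1) (b - 1)) else 0)\<rparr>"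

lemma cd_car: "sg_car (cd S) = insert 0 (Suc ` sd_E S)" by (simp add: cd_def)
lemma cd_mul_SS[simp]: "sg_mul (cd S) (Suc s) (Suc t) = (if sd_src S s = sd_tgt S t then Suc (sd_mul S s t) else 0)"
  by (simp add: cd_def)
lemma cd_mul_0[simp]: "sg_mul (cd S) 0 b = 0" "sg_mul (cd S) a 0 = 0" by (simp_all add: cd_def)
lemma cd_mul_nz: "sg_mul (cd S) a b \<noteq> 0 \<Longrightarrow> a \<noteq> 0 \<and> b \<noteq> 0"
  by (auto simp add: cd_def split: if_splits)

lemma sg_prod_car[simp]: "sg_car (sg_prod S T) = prod_encode ` (sg_car S \<times> sg_car T)"
  by (simp add: sg_prod_def)
lemma sg_prod_mul[simp]: "sg_mul (sg_prod S T) (prod_encode (a,b)) (prod_encode (c,d)) = prod_encode (sg_mul S a c, sg_mul T b d)"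
  by (simp add: sg_prod_def prod_encode_inverse)

lemma pv_fin: "pv_sg V \<Longrightarrow> S \<in> V \<Longrightarrow> fin_sg S"
  by (rule bspec[OF pv_sg_def[THEN iffD1, THEN conjunct1]])
lemma pv_prod: "pv_sg V \<Longrightarrow> S \<in> V \<Longrightarrow> T \<in> V \<Longrightarrow> sg_prod S T \<in> V"
  by (rule bspec[OF bspec[OF pv_sg_def[THEN iffD1, THEN conjunct2, THEN conjunct2, THEN conjunct2]]])
lemma pv_sub: "pv_sg V \<Longrightarrow> S \<in> V \<Longrightarrow> C \<subseteq> sg_car S \<Longrightarrow> C \<noteq> {} \<Longrightarrow> (\<forall>x\<in>C. \<forall>y\<in>C. sg_mul S x y \<in> C)
          \<Longrightarrow> \<lparr> sg_car = C, sg_mul = sg_mul S \<rparr> \<in> V"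
  using bspec[OF pv_sg_def[THEN iffD1, THEN conjunct2, THEN conjunct1]] by blast
lemma pv_img: "pv_sg V \<Longrightarrow> S \<in> V \<Longrightarrow> fin_sg T \<Longrightarrow> sg_hom S T h \<Longrightarrow> h ` sg_car S = sg_car T \<Longrightarrow> T \<in> V"
  using bspec[OF pv_sg_def[THEN iffD1, THEN conjunct2, THEN conjunct2, THEN conjunct1]] by blast

lemma pv_quot:
  assumes pv: "pv_sg V" and S: "S \<in> V" and Cs: "Cs \<subseteq> sg_car S" "Cs \<noteq> {}"
    and cl: "\<forall>a\<in>Cs. \<forall>b\<in>Cs. sg_mul S a b \<in> Cs"
    and surj: "h ` Cs = sg_car T"
    and hom: "\<forall>a\<in>Cs. \<forall>b\<in>Cs. h (sg_mul S a b) = sg_mul T (h a) (h b)"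
  shows "T \<in> V"
proof -
  let ?U = "\<lparr>sg_car = Cs, sg_mul = sg_mul S\<rparr>"
  have U: "?U \<in> V" by (rule pv_sub[OF pv S Cs cl])
  have fS: "fin_sg S" using pv S by (rule pv_fin)
  have "finite Cs" using fS Cs(1) finite_subset unfolding fin_sg_def by blast
  then have fin: "finite (sg_car T)" using surj by (metis finite_imageI)
  have clT: "\<forall>x\<in>sg_car T. \<forall>y\<in>sg_car T. sg_mul T x y \<in> sg_car T"
  proof (intro ballI)
    fix x y assume "x \<in> sg_car T" "y \<in> sg_car T"
    then obtain a b where ab: "a \<in> Cs" "b \<in> Cs" "x = h a" "y = h b" using surj by blast
    then have "sg_mul T x y = h (sg_mul S a b)" using hom by simp
    then show "sg_mul T x y \<in> sg_car T" using ab cl surj by blast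
  qed
  have asT: "\<forall>x\<in>sg_car T. \<forall>y\<in>sg_car T. \<forall>z\<in>sg_car T. sg_mul T (sg_mul T x y) z = sg_mul T x (sg_mul T y z)"
  proof (intro ballI)
    fix x y z assume "x \<in> sg_car T" "y \<in> sg_car T" "z \<in> sg_car T"
    then obtain a b c where abc: "a \<in> Cs" "b \<in> Cs" "c \<in> Cs" "x = h a" "y = h b" "z = h c" using surj by blast
    have "sg_mul S (sg_mul S a b) c = sg_mul S a (sg_mul S b c)" using fS abc Cs unfolding fin_sg_def by blast
    moreover have "sg_mul T (sg_mul T x y) z = h (sg_mul S (sg_mul S a b) c)" using hom cl abc by simp
    moreover have "sg_mul T x (sg_mul T y z) = h (sg_mul S a (sg_mul S b c))" using hom cl abc by simp
    ultimately show "sg_mul T (sg_mul T x y) z = sg_mul T x (sg_mul T y z)" by simp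
  qed
  have "sg_car T \<noteq> {}" using surj Cs(2) by blast
  then have fT: "fin_sg T" unfolding fin_sg_def using fin clT asT by blast
  have "sg_hom ?U T h" unfolding sg_hom_def using surj hom by auto
  then show ?thesis using pv_img[OF pv U fT] surj by simp
qed

lemma B2_car: "sg_car B2 = {0,1,2,3,4}" by (simp add: B2_def)
lemma B2_mul: "sg_mul B2 a b = (if a \<noteq> 0 \<and> b \<noteq> 0 \<and> (a - 1) mod 2 = (b - 1) div 2
                     then 1 + 2 * ((a - 1) div 2) + (b - 1) mod 2 else 0)" by (simp add: B2_def)

lemma fin_sg_car_ne: "fin_sg S \<Longrightarrow> sg_car S \<noteq> {}" by (simp add: fin_sg_def)

lemma cd_base:
  assumes pv: "pv_sg V" and S: "S \<in> V" and B2: "B2 \<in> V"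
  shows "cd (sg_as_sgd S) \<in> V"
proof (rule pv_quot[OF pv pv_prod[OF pv S B2], where Cs="prod_encode ` (sg_car S \<times> {0,1})"
      and h="\<lambda>y. if snd (prod_decode y) = 1 then Suc (fst (prod_decode y)) else 0"])
  have fS: "fin_sg S" by (rule pv_fin[OF pv S])
  show "prod_encode ` (sg_car S \<times> {0, 1}) \<subseteq> sg_car (sg_prod S B2)" by (auto simp: B2_car)
  show "prod_encode ` (sg_car S \<times> {0, 1}) \<noteq> {}" using fin_sg_car_ne[OF fS] by auto
  have m: "\<And>b d. b \<in> {0::nat,1} \<Longrightarrow> d \<in> {0,1} \<Longrightarrow> sg_mul B2 b d = (if b = 1 \<and> d = 1 then 1 else 0)"
    by (auto simp: B2_mul)
  have cl: "\<And>a c. a \<in> sg_car S \<Longrightarrow> c \<in> sg_car S \<Longrightarrow> sg_mul S a c \<in> sg_car S" using fS by (simp add: fin_sg_def)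
  show "\<forall>a\<in>prod_encode ` (sg_car S \<times> {0, 1}). \<forall>b\<in>prod_encode ` (sg_car S \<times> {0, 1}).
        sg_mul (sg_prod S B2) a b \<in> prod_encode ` (sg_car S \<times> {0, 1})"
    using m cl by auto
  show "(\<lambda>y. if snd (prod_decode y) = 1 then Suc (fst (prod_decode y)) else 0) ` prod_encode ` (sg_car S \<times> {0, 1}) =
    sg_car (cd (sg_as_sgd S))"
  proof -
    obtain s0 where "s0 \<in> sg_car S" using fin_sg_car_ne[OF fS] by auto
    then have "0 \<in> (\<lambda>y. if snd (prod_decode y) = 1 then Suc (fst (prod_decode y)) else 0) ` prod_encode ` (sg_car S \<times> {0, 1})"
      by (intro image_eqI[where x="prod_encode (s0,0)"]) auto
    moreover have "Suc ` sg_car S \<subseteq> (\<lambda>y. if snd (prod_decode y) = 1 then Suc (fst (prod_decode y)) else 0) ` prod_encode ` (sg_car S \<times> {0, 1})"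
    proof
      fix y assume "y \<in> Suc ` sg_car S"
      then obtain t where t: "t \<in> sg_car S" "y = Suc t" by auto
      then show "y \<in> (\<lambda>y. if snd (prod_decode y) = 1 then Suc (fst (prod_decode y)) else 0) ` prod_encode ` (sg_car S \<times> {0, 1})"
        by (intro image_eqI[where x="prod_encode (t,1)"]) auto
    qed
    ultimately show ?thesis by (auto simp: cd_car sg_as_sgd_def)
  qed
  show "\<forall>a\<in>prod_encode ` (sg_car S \<times> {0, 1}). \<forall>b\<in>prod_encode ` (sg_car S \<times> {0, 1}).
       (\<lambda>y. if snd (prod_decode y) = 1 then Suc (fst (prod_decode y)) else 0) (sg_mul (sg_prod S B2) a b) =
       sg_mul (cd (sg_as_sgd S)) ((\<lambda>y. if snd (prod_decode y) = 1 then Suc (fst (prod_decode y)) else 0) a)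
        ((\<lambda>y. if snd (prod_decode y) = 1 then Suc (fst (prod_decode y)) else 0) b)"
    using m by (auto simp: sg_as_sgd_def)
qed

lemma sgd_prod_simps[simp]:
  "sd_V (sgd_prod S T) = prod_encode ` (sd_V S \<times> sd_V T)"
  "sd_E (sgd_prod S T) = prod_encode ` (sd_E S \<times> sd_E T)"
  "sd_src (sgd_prod S T) (prod_encode (s,t)) = prod_encode (sd_src S s, sd_src T t)"
  "sd_tgt (sgd_prod S T) (prod_encode (s,t)) = prod_encode (sd_tgt S s, sd_tgt T t)"
  "sd_mul (sgd_prod S T) (prod_encode (s,t)) (prod_encode (s',t')) = prod_encode (sd_mul S s s', sd_mul T t t')"
  by (simp_all add: sgd_prod_def)

lemma fin_sgd_prod: assumes "fin_sgd S" "fin_sgd T" shows "fin_sgd (sgd_prod S T)"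
  using assms unfolding fin_sgd_def by auto

definition hprod :: "nat \<Rightarrow> nat" where
  "hprod y = (case prod_decode y of (a,b) \<Rightarrow> if a \<noteq> 0 \<and> b \<noteq> 0 then Suc (prod_encode (a - 1, b - 1)) else 0)"

lemma cd_prod:
  assumes pv: "pv_sg V" and S: "cd S \<in> V" and T: "cd T \<in> V" and fS: "fin_sgd S" and fT: "fin_sgd T"
  shows "cd (sgd_prod S T) \<in> V"
proof (rule pv_quot[OF pv pv_prod[OF pv S T], where Cs="sg_car (sg_prod (cd S) (cd T))" and h=hprod])
  show "sg_car (sg_prod (cd S) (cd T)) \<subseteq> sg_car (sg_prod (cd S) (cd T))" by simp
  show "sg_car (sg_prod (cd S) (cd T)) \<noteq> {}" by (simp add: cd_car)
  show "\<forall>a\<in>sg_car (sg_prod (cd S) (cd T)). \<forall>b\<in>sg_car (sg_prod (cd S) (cd T)).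
       sg_mul (sg_prod (cd S) (cd T)) a b \<in> sg_car (sg_prod (cd S) (cd T))"
    using fS fT unfolding fin_sgd_def by (auto simp: cd_car)
  show "hprod ` sg_car (sg_prod (cd S) (cd T)) = sg_car (cd (sgd_prod S T))"
  proof
    show "hprod ` sg_car (sg_prod (cd S) (cd T)) \<subseteq> sg_car (cd (sgd_prod S T))"
      by (auto simp: cd_car hprod_def)
    show "sg_car (cd (sgd_prod S T)) \<subseteq> hprod ` sg_car (sg_prod (cd S) (cd T))"
    proof
      fix y assume "y \<in> sg_car (cd (sgd_prod S T))"
      then consider "y = 0" | s t where "s \<in> sd_E S" "t \<in> sd_E T" "y = Suc (prod_encode (s,t))"
        by (auto simp: cd_car)
      then show "y \<in> hprod ` sg_car (sg_prod (cd S) (cd T))"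
      proof cases
        case 1 then show ?thesis by (intro image_eqI[where x="prod_encode (0,0)"]) (auto simp: hprod_def cd_car)
      next
        case (2 s t) then show ?thesis
          by (intro image_eqI[where x="prod_encode (Suc s,Suc t)"]) (auto simp: hprod_def cd_car)
      qed
    qed
  qed
  show "\<forall>a\<in>sg_car (sg_prod (cd S) (cd T)). \<forall>b\<in>sg_car (sg_prod (cd S) (cd T)).
       hprod (sg_mul (sg_prod (cd S) (cd T)) a b) = sg_mul (cd (sgd_prod S T)) (hprod a) (hprod b)"
    by (auto simp: cd_car hprod_def)
qed

lemma cd_closed: assumes "fin_sgd S" "a \<in> sg_car (cd S)" "b \<in> sg_car (cd S)"
  shows "sg_mul (cd S) a b \<in> sg_car (cd S)"
  using assms unfolding fin_sgd_def by (auto simp: cd_car)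

lemma B2_closed: "a \<in> sg_car B2 \<Longrightarrow> b \<in> sg_car B2 \<Longrightarrow> sg_mul B2 a b \<in> sg_car B2"
  by (auto simp: B2_car B2_mul)

lemma odd_ne_even[simp]: "2 * (a::nat) \<noteq> Suc (2 * b)" "Suc (2 * (b::nat)) \<noteq> 2 * a"
  by presburger+

lemma cd_0_car[simp]: "0 \<in> sg_car (cd S)" by (simp add: cd_car)

lemma sgd_coprod_simps[simp]:
  "sd_V (sgd_coprod S T) = (\<lambda>n. 2 * n) ` sd_V S \<union> (\<lambda>n. 2 * n + 1) ` sd_V T"
  "sd_E (sgd_coprod S T) = (\<lambda>n. 2 * n) ` sd_E S \<union> (\<lambda>n. 2 * n + 1) ` sd_E T"
  "sd_src (sgd_coprod S T) (2 * s) = 2 * sd_src S s"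
  "sd_tgt (sgd_coprod S T) (2 * s) = 2 * sd_tgt S s"
  "sd_src (sgd_coprod S T) (Suc (2 * t)) = Suc (2 * sd_src T t)"
  "sd_tgt (sgd_coprod S T) (Suc (2 * t)) = Suc (2 * sd_tgt T t)"
  "sd_mul (sgd_coprod S T) (2 * s) (2 * s') = 2 * sd_mul S s s'"
  "sd_mul (sgd_coprod S T) (Suc (2 * t)) b = Suc (2 * sd_mul T t (b div 2))"
  by (simp_all add: sgd_coprod_def)

lemma fin_sgd_coprod: assumes "fin_sgd S" "fin_sgd T" shows "fin_sgd (sgd_coprod S T)"
  using assms unfolding fin_sgd_def by auto

definition hcop :: "nat \<Rightarrow> nat" where
  "hcop y = (case prod_decode y of (a,b) \<Rightarrow> if a \<noteq> 0 then Suc (2 * (a - 1)) else if b \<noteq> 0 then Suc (2 * (b - 1) + 1) else 0)"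

lemma cd_coprod:
  assumes pv: "pv_sg V" and S: "cd S \<in> V" and T: "cd T \<in> V" and fS: "fin_sgd S" and fT: "fin_sgd T"
  shows "cd (sgd_coprod S T) \<in> V"
proof -
  let ?Cs = "{prod_encode (a,0) |a. a \<in> sg_car (cd S)} \<union> {prod_encode (0,b) |b. b \<in> sg_car (cd T)}"
  show ?thesis
proof (rule pv_quot[OF pv pv_prod[OF pv S T], where Cs="?Cs" and h=hcop])
  show "?Cs \<subseteq> sg_car (sg_prod (cd S) (cd T))"
    by (auto simp: cd_car)
  show "?Cs \<noteq> {}"
    by (auto simp: cd_car)
  show "\<forall>a\<in>?Cs.
       \<forall>b\<in>?Cs.
       sg_mul (sg_prod (cd S) (cd T)) a b \<in> ?Cs"
    using cd_closed[OF fS] cd_closed[OF fT] by auto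
  show "hcop ` (?Cs) = sg_car (cd (sgd_coprod S T))"
  proof
    show "hcop ` (?Cs) \<subseteq> sg_car (cd (sgd_coprod S T))"
      by (auto simp: cd_car hcop_def)
    show "sg_car (cd (sgd_coprod S T)) \<subseteq> hcop ` (?Cs)"
    proof
      fix y assume "y \<in> sg_car (cd (sgd_coprod S T))"
      then consider "y = 0" | s where "s \<in> sd_E S" "y = Suc (2 * s)" | t where "t \<in> sd_E T" "y = Suc (2 * t + 1)"
        by (auto simp: cd_car)
      then show "y \<in> hcop ` (?Cs)"
      proof cases
        case 1 then show ?thesis by (intro image_eqI[where x="prod_encode (0,0)"]) (auto simp: hcop_def cd_car)
      next
        case (2 s) then show ?thesis
          by (intro image_eqI[where x="prod_encode (Suc s,0)"]) (auto simp: hcop_def cd_car)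
      next
        case (3 t) then show ?thesis
          by (intro image_eqI[where x="prod_encode (0, Suc t)"]) (auto simp: hcop_def cd_car)
      qed
    qed
  qed
  show "\<forall>a\<in>?Cs.
       \<forall>b\<in>?Cs.
       hcop (sg_mul (sg_prod (cd S) (cd T)) a b) = sg_mul (cd (sgd_coprod S T)) (hcop a) (hcop b)"
    by (auto simp: cd_car hcop_def)
qed
qed

definition Kg :: "nat set \<Rightarrow> fsgd" where
  "Kg P = \<lparr>sd_V = P, sd_E = prod_encode ` (P \<times> P), sd_src = (\<lambda>e. snd (prod_decode e)),
     sd_tgt = (\<lambda>e. fst (prod_decode e)),
     sd_mul = (\<lambda>a b. prod_encode (fst (prod_decode a), snd (prod_decode b)))\<rparr>"

lemma Kg_simps[simp]: "sd_V (Kg P) = P" "sd_E (Kg P) = prod_encode ` (P \<times> P)"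
  "sd_src (Kg P) (prod_encode (a,b)) = b" "sd_tgt (Kg P) (prod_encode (a,b)) = a"
  "sd_mul (Kg P) (prod_encode (a,b)) (prod_encode (c,d)) = prod_encode (a,d)"
  by (simp_all add: Kg_def)

lemma fin_sgd_Kg: "finite P \<Longrightarrow> fin_sgd (Kg P)"
  unfolding fin_sgd_def by auto

definition OH :: "fsg set \<Rightarrow> nat set \<Rightarrow> fsg \<Rightarrow> (nat \<Rightarrow> nat \<Rightarrow> nat) \<Rightarrow> nat set \<Rightarrow> bool" where
  "OH V P T f Z \<longleftrightarrow> T \<in> V \<and> Z \<subseteq> sg_car T \<and> Z \<noteq> {} \<and>
    (\<forall>z\<in>Z. \<forall>t\<in>sg_car T. sg_mul T z t \<in> Z \<and> sg_mul T t z \<in> Z) \<and>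
    (\<forall>a b. f a b \<in> sg_car T \<and> f a b \<notin> Z) \<and>
    (\<forall>a b c. sg_mul T (f a b) (f b c) = f a c) \<and>
    (\<forall>a b c d. b \<noteq> c \<and> (b \<in> P \<or> c \<in> P) \<longrightarrow> sg_mul T (f a b) (f c d) \<in> Z) \<and>
    (\<forall>a b c d. f a b = f c d \<longrightarrow> (a \<in> P \<or> c \<in> P \<longrightarrow> a = c) \<and> (b \<in> P \<or> d \<in> P \<longrightarrow> b = d))"

definition beta :: "nat \<Rightarrow> nat \<Rightarrow> nat \<Rightarrow> nat" where
  "beta p a b = 1 + 2 * (if a = p then 1 else 0) + (if b = p then 1 else 0)"

lemma beta_car: "beta p a b \<in> sg_car B2" "beta p a b \<noteq> 0" by (auto simp: beta_def B2_car)
lemma beta_mul: "sg_mul B2 (beta p a b) (beta p b c) = beta p a c" by (auto simp: beta_def B2_mul)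
lemma beta_mul0: "(b = p) \<noteq> (c = p) \<Longrightarrow> sg_mul B2 (beta p a b) (beta p c d) = 0" by (auto simp: beta_def B2_mul)
lemma beta_inj: "beta p a b = beta p c d \<Longrightarrow> (a = p) = (c = p) \<and> (b = p) = (d = p)" by (auto simp: beta_def split: if_splits)
lemma B2_0[simp]: "sg_mul B2 0 x = 0" "sg_mul B2 x 0 = 0" by (auto simp: B2_mul)
lemma B2_0car: "0 \<in> sg_car B2" by (simp add: B2_car)

lemma OH_D:
  assumes "OH V P T f Z"
  shows "T \<in> V" "Z \<subseteq> sg_car T" "Z \<noteq> {}"
    "\<And>z t. z \<in> Z \<Longrightarrow> t \<in> sg_car T \<Longrightarrow> sg_mul T z t \<in> Z"
    "\<And>z t. z \<in> Z \<Longrightarrow> t \<in> sg_car T \<Longrightarrow> sg_mul T t z \<in> Z"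
    "\<And>a b. f a b \<in> sg_car T" "\<And>a b. f a b \<notin> Z"
    "\<And>a b c. sg_mul T (f a b) (f b c) = f a c"
    "\<And>a b c d. b \<noteq> c \<Longrightarrow> b \<in> P \<or> c \<in> P \<Longrightarrow> sg_mul T (f a b) (f c d) \<in> Z"
    "\<And>a b c d. f a b = f c d \<Longrightarrow> a \<in> P \<or> c \<in> P \<Longrightarrow> a = c"
    "\<And>a b c d. f a b = f c d \<Longrightarrow> b \<in> P \<or> d \<in> P \<Longrightarrow> b = d"
  using assms unfolding OH_def by (elim conjE; metis)+

lemma OH_exists:
  assumes pv: "pv_sg V" and B2: "B2 \<in> V" and fin: "finite P"
  shows "\<exists>T f Z. OH V P T f Z"
  using fin
proof (induction P rule: finite_induct)
  case empty
  have "OH V {} B2 (\<lambda>a b. 1) {0}" unfolding OH_def using B2 by (simp add: B2_car B2_mul)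
  then show ?case by blast
next
  case (insert p P)
  then obtain T f Z where oh: "OH V P T f Z" by blast
  note O = OH_D[OF oh]
  have TV: "T \<in> V" by (rule O(1))
  have fT: "fin_sg T" by (rule pv_fin[OF pv TV])
  have clT: "\<And>x y. x \<in> sg_car T \<Longrightarrow> y \<in> sg_car T \<Longrightarrow> sg_mul T x y \<in> sg_car T" using fT by (simp add: fin_sg_def)
  define T' where "T' = sg_prod T B2"
  define f' where "f' = (\<lambda>a b. prod_encode (f a b, beta p a b))"
  define Z' where "Z' = prod_encode ` ((Z \<times> sg_car B2) \<union> (sg_car T \<times> {0}))"
  have "OH V (insert p P) T' f' Z'"
    unfolding OH_def
  proof (intro conjI allI impI ballI)
    show "T' \<in> V" unfolding T'_def by (rule pv_prod[OF pv TV B2])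
    show "Z' \<subseteq> sg_car T'" using O(2) B2_car unfolding Z'_def T'_def by auto
    show "Z' \<noteq> {}" using O(3) B2_car unfolding Z'_def by auto
  next
    fix z t assume z: "z \<in> Z'" and t: "t \<in> sg_car T'"
    from z obtain z1 z2 where zz: "z = prod_encode (z1,z2)" "(z1,z2) \<in> (Z \<times> sg_car B2) \<union> (sg_car T \<times> {0})"
      unfolding Z'_def by auto
    from t obtain t1 t2 where tt: "t = prod_encode (t1,t2)" "t1 \<in> sg_car T" "t2 \<in> sg_car B2"
      unfolding T'_def by auto
    have Zc: "Z \<subseteq> sg_car T" by (rule O(2))
    show "sg_mul T' z t \<in> Z'"
    proof (cases "z1 \<in> Z")
      case True then show ?thesis using zz tt O(4) B2_closed B2_0car unfolding Z'_def T'_def by (auto intro!: imageI)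
    next
      case False then have "z2 = 0" "z1 \<in> sg_car T" using zz by auto
      then show ?thesis using zz tt clT unfolding Z'_def T'_def by (auto intro!: imageI)
    qed
    show "sg_mul T' t z \<in> Z'"
    proof (cases "z1 \<in> Z")
      case True then show ?thesis using zz tt O(5) B2_closed B2_0car unfolding Z'_def T'_def by (auto intro!: imageI)
    next
      case False then have "z2 = 0" "z1 \<in> sg_car T" using zz by auto
      then show ?thesis using zz tt clT unfolding Z'_def T'_def by (auto intro!: imageI)
    qed
  next
    fix a b
    have "f a b \<in> sg_car T" "f a b \<notin> Z" using O(6,7) by auto
    then show "f' a b \<in> sg_car T'" "f' a b \<notin> Z'" unfolding f'_def T'_def Z'_def using beta_car[of p a b] by auto
  next
    fix a b c
    have "sg_mul T (f a b) (f b c) = f a c" using O(8) by auto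
    then show "sg_mul T' (f' a b) (f' b c) = f' a c" unfolding f'_def T'_def by (simp add: beta_mul)
  next
    fix a b c d assume h: "b \<noteq> c \<and> (b \<in> insert p P \<or> c \<in> insert p P)"
    have fc: "sg_mul T (f a b) (f c d) \<in> sg_car T" using O(6) clT by simp
    show "sg_mul T' (f' a b) (f' c d) \<in> Z'"
    proof (cases "b = p \<or> c = p")
      case True
      then have "(b = p) \<noteq> (c = p)" using h by auto
      then show ?thesis unfolding f'_def T'_def Z'_def using fc by (simp add: beta_mul0)
    next
      case False
      then have "b \<in> P \<or> c \<in> P" using h by auto
      then have "sg_mul T (f a b) (f c d) \<in> Z" using O(9) h by simp
      then show ?thesis unfolding f'_def T'_def Z'_def
        using B2_closed beta_car by auto
    qed
  next
    fix a b c d assume e: "f' a b = f' c d" and "a \<in> insert p P \<or> c \<in> insert p P"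
    then show "a = c" using O(10)[of a b c d] beta_inj[of p a b c d] unfolding f'_def by auto
  next
    fix a b c d assume e: "f' a b = f' c d" and "b \<in> insert p P \<or> d \<in> insert p P"
    then show "b = d" using O(11)[of a b c d] beta_inj[of p a b c d] unfolding f'_def by auto
  qed
  then show ?case by blast
qed

lemma Brandt:
  assumes pv: "pv_sg V" and B2: "B2 \<in> V" and fin: "finite P"
  shows "cd (Kg P) \<in> V"
proof -
  obtain T f Z where oh: "OH V P T f Z" using OH_exists[OF pv B2 fin] by blast
  note O = OH_D[OF oh]
  have fT: "fin_sg T" by (rule pv_fin[OF pv O(1)])
  have clT: "\<And>x y. x \<in> sg_car T \<Longrightarrow> y \<in> sg_car T \<Longrightarrow> sg_mul T x y \<in> sg_car T" using fT by (simp add: fin_sg_def)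
  define h where "h = (\<lambda>x. if x \<in> Z then 0 else Suc (prod_encode (SOME ab. ab \<in> P \<times> P \<and> f (fst ab) (snd ab) = x)))"
  have hf: "h (f a b) = Suc (prod_encode (a,b))" if ab: "a \<in> P" "b \<in> P" for a b
  proof -
    have "(SOME ab. ab \<in> P \<times> P \<and> f (fst ab) (snd ab) = f a b) = (a,b)"
    proof (rule some_equality)
      show "(a, b) \<in> P \<times> P \<and> f (fst (a, b)) (snd (a, b)) = f a b" using ab by simp
    next
      fix ab assume "ab \<in> P \<times> P \<and> f (fst ab) (snd ab) = f a b"
      then show "ab = (a,b)" using O(10)[of "fst ab" "snd ab" a b] O(11)[of "fst ab" "snd ab" a b] ab
        by (cases ab) auto
    qed
    then show ?thesis using O(7) unfolding h_def by simp
  qed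
  have hZ: "\<And>z. z \<in> Z \<Longrightarrow> h z = 0" unfolding h_def by simp
  let ?Cs = "{f a b |a b. a \<in> P \<and> b \<in> P} \<union> Z"
  show ?thesis
  proof (rule pv_quot[OF pv O(1), where Cs="?Cs" and h=h])
    show "?Cs \<subseteq> sg_car T" using O(2,6) by auto
    show "?Cs \<noteq> {}" using O(3) by auto
    show "\<forall>a\<in>?Cs. \<forall>b\<in>?Cs. sg_mul T a b \<in> ?Cs"
    proof (intro ballI)
      fix x y assume x: "x \<in> ?Cs" and y: "y \<in> ?Cs"
      have xc: "x \<in> sg_car T" "y \<in> sg_car T" using x y O(2,6) by auto
      show "sg_mul T x y \<in> ?Cs"
      proof (cases "x \<in> Z \<or> y \<in> Z")
        case True then show ?thesis using O(4,5) xc by auto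
      next
        case False
        then obtain a b c d where abcd: "x = f a b" "y = f c d" "a \<in> P" "b \<in> P" "c \<in> P" "d \<in> P" using x y by auto
        show ?thesis
        proof (cases "b = c")
          case True then show ?thesis using abcd O(8) by auto
        next
          case False then show ?thesis using abcd O(9) by auto
        qed
      qed
    qed
    show "h ` ?Cs = sg_car (cd (Kg P))"
    proof
      show "h ` ?Cs \<subseteq> sg_car (cd (Kg P))" using hf hZ by (auto simp: cd_car)
      show "sg_car (cd (Kg P)) \<subseteq> h ` ?Cs"
      proof
        fix y assume "y \<in> sg_car (cd (Kg P))"
        then consider "y = 0" | a b where "a \<in> P" "b \<in> P" "y = Suc (prod_encode (a,b))" by (auto simp: cd_car)
        then show "y \<in> h ` ?Cs"
        proof cases
          case 1
          obtain z where "z \<in> Z" using O(3) by auto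
          then show ?thesis using 1 hZ by (intro image_eqI[where x=z]) auto
        next
          case (2 a b) then show ?thesis using hf by (intro image_eqI[where x="f a b"]) auto
        qed
      qed
    qed
    show "\<forall>a\<in>?Cs. \<forall>b\<in>?Cs. h (sg_mul T a b) = sg_mul (cd (Kg P)) (h a) (h b)"
    proof (intro ballI)
      fix x y assume x: "x \<in> ?Cs" and y: "y \<in> ?Cs"
      have xc: "x \<in> sg_car T" "y \<in> sg_car T" using x y O(2,6) by auto
      show "h (sg_mul T x y) = sg_mul (cd (Kg P)) (h x) (h y)"
      proof (cases "x \<in> Z \<or> y \<in> Z")
        case True then show ?thesis using O(4,5) xc hZ by auto
      next
        case False
        then obtain a b c d where abcd: "x = f a b" "y = f c d" "a \<in> P" "b \<in> P" "c \<in> P" "d \<in> P" using x y by auto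
        show ?thesis
        proof (cases "b = c")
          case True then show ?thesis using abcd O(8) hf by auto
        next
          case False then show ?thesis using abcd O(9) hf hZ by auto
        qed
      qed
    qed
  qed
qed

lemma morphD:
  assumes "sgd_morph S T hv he"
  shows "\<And>v. v \<in> sd_V S \<Longrightarrow> hv v \<in> sd_V T"
    "\<And>s. s \<in> sd_E S \<Longrightarrow> he s \<in> sd_E T"
    "\<And>s. s \<in> sd_E S \<Longrightarrow> sd_src T (he s) = hv (sd_src S s)"
    "\<And>s. s \<in> sd_E S \<Longrightarrow> sd_tgt T (he s) = hv (sd_tgt S s)"
    "\<And>s t. s \<in> sd_E S \<Longrightarrow> t \<in> sd_E S \<Longrightarrow> sd_src S s = sd_tgt S t \<Longrightarrow> he (sd_mul S s t) = sd_mul T (he s) (he t)"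
  using assms unfolding sgd_morph_def by blast+

lemma fin_sgdD:
  assumes "fin_sgd S"
  shows "finite (sd_V S)" "finite (sd_E S)"
    "\<And>s. s \<in> sd_E S \<Longrightarrow> sd_src S s \<in> sd_V S"
    "\<And>s. s \<in> sd_E S \<Longrightarrow> sd_tgt S s \<in> sd_V S"
    "\<And>s t. s \<in> sd_E S \<Longrightarrow> t \<in> sd_E S \<Longrightarrow> sd_src S s = sd_tgt S t \<Longrightarrow> sd_mul S s t \<in> sd_E S"
    "\<And>s t. s \<in> sd_E S \<Longrightarrow> t \<in> sd_E S \<Longrightarrow> sd_src S s = sd_tgt S t \<Longrightarrow> sd_src S (sd_mul S s t) = sd_src S t"
    "\<And>s t. s \<in> sd_E S \<Longrightarrow> t \<in> sd_E S \<Longrightarrow> sd_src S s = sd_tgt S t \<Longrightarrow> sd_tgt S (sd_mul S s t) = sd_tgt S s"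
    "\<And>s t r. s \<in> sd_E S \<Longrightarrow> t \<in> sd_E S \<Longrightarrow> r \<in> sd_E S \<Longrightarrow> sd_src S s = sd_tgt S t \<Longrightarrow> sd_src S t = sd_tgt S r \<Longrightarrow>
        sd_mul S (sd_mul S s t) r = sd_mul S s (sd_mul S t r)"
  using assms unfolding fin_sgd_def by blast+

lemma cd_faithful:
  assumes pv: "pv_sg V" and B2: "B2 \<in> V" and fR: "fin_sgd R" and fT: "fin_sgd T" and cT: "cd T \<in> V"
    and mor: "sgd_morph R T fv fe"
    and faith: "\<forall>r\<in>sd_E R. \<forall>r'\<in>sd_E R. sd_src R r = sd_src R r' \<and> sd_tgt R r = sd_tgt R r' \<and> fe r = fe r' \<longrightarrow> r = r'"
  shows "cd R \<in> V"
proof -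
  let ?P = "sd_V R"
  note M = morphD[OF mor]
  note F = fin_sgdD[OF fR]
  have cK: "cd (Kg ?P) \<in> V" by (rule Brandt[OF pv B2 F(1)])
  define code where "code = (\<lambda>r. prod_encode (Suc (fe r), Suc (prod_encode (sd_tgt R r, sd_src R r))))"
  have code_inj: "\<And>r r'. r \<in> sd_E R \<Longrightarrow> r' \<in> sd_E R \<Longrightarrow> code r = code r' \<Longrightarrow> r = r'"
    using faith unfolding code_def by auto
  define h where "h = (\<lambda>y. if snd (prod_decode y) = 0 then 0 else Suc (THE r. r \<in> sd_E R \<and> code r = y))"
  have hcode: "\<And>r. r \<in> sd_E R \<Longrightarrow> h (code r) = Suc r"
  proof -
    fix r assume r: "r \<in> sd_E R"
    have "(THE r'. r' \<in> sd_E R \<and> code r' = code r) = r"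
      using r code_inj by (intro the_equality) auto
    then show "h (code r) = Suc r" unfolding h_def by (simp add: code_def)
  qed
  have h0: "\<And>x. h (prod_encode (x, 0)) = 0" unfolding h_def by simp
  let ?Cs = "code ` sd_E R \<union> {prod_encode (x, 0) |x. x \<in> sg_car (cd T)}"
  have codemul: "sg_mul (sg_prod (cd T) (cd (Kg ?P))) (code r) (code r') =
     (if sd_src R r = sd_tgt R r' then code (sd_mul R r r') else prod_encode (sg_mul (cd T) (Suc (fe r)) (Suc (fe r')), 0))"
    if r: "r \<in> sd_E R" "r' \<in> sd_E R" for r r'
  proof (cases "sd_src R r = sd_tgt R r'")
    case True
    have "sd_src T (fe r) = sd_tgt T (fe r')" using M(3,4) r True by simp
    then show ?thesis using True r M(5) F(6,7) unfolding code_def by simp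
  next
    case False then show ?thesis unfolding code_def by simp
  qed
  show ?thesis
  proof (rule pv_quot[OF pv pv_prod[OF pv cT cK], where Cs="?Cs" and h=h])
    show "?Cs \<subseteq> sg_car (sg_prod (cd T) (cd (Kg ?P)))"
      using M(2) F(3,4) unfolding code_def by (auto simp: cd_car)
    show "?Cs \<noteq> {}" using cd_0_car by blast
    show "\<forall>a\<in>?Cs. \<forall>b\<in>?Cs. sg_mul (sg_prod (cd T) (cd (Kg ?P))) a b \<in> ?Cs"
    proof (intro ballI)
      fix x y assume x: "x \<in> ?Cs" and y: "y \<in> ?Cs"
      have Tc: "\<And>r. r \<in> sd_E R \<Longrightarrow> Suc (fe r) \<in> sg_car (cd T)" using M(2) by (simp add: cd_car)
      show "sg_mul (sg_prod (cd T) (cd (Kg ?P))) x y \<in> ?Cs"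
      proof (cases "x \<in> code ` sd_E R \<and> y \<in> code ` sd_E R")
        case True
        then obtain r r' where rr: "r \<in> sd_E R" "r' \<in> sd_E R" "x = code r" "y = code r'" by auto
        show ?thesis using codemul[OF rr(1,2)] rr F(5) cd_closed[OF fT Tc Tc] by auto
      next
        case False
        then obtain x1 x2 y1 y2 where xy: "x = prod_encode (x1,x2)" "y = prod_encode (y1,y2)"
          "x1 \<in> sg_car (cd T)" "y1 \<in> sg_car (cd T)" "x2 = 0 \<or> y2 = 0"
          using x y Tc unfolding code_def by auto
        then show ?thesis using cd_closed[OF fT] by auto
      qed
    qed
    show "h ` ?Cs = sg_car (cd R)"
    proof
      show "h ` ?Cs \<subseteq> sg_car (cd R)" using hcode h0 by (auto simp: cd_car)
      show "sg_car (cd R) \<subseteq> h ` ?Cs"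
      proof
        fix y assume "y \<in> sg_car (cd R)"
        then consider "y = 0" | r where "r \<in> sd_E R" "y = Suc r" by (auto simp: cd_car)
        then show "y \<in> h ` ?Cs"
        proof cases
          case 1 then show ?thesis using h0 by (intro image_eqI[where x="prod_encode (0,0)"]) auto
        next
          case (2 r) then show ?thesis using hcode by (intro image_eqI[where x="code r"]) auto
        qed
      qed
    qed
    show "\<forall>a\<in>?Cs. \<forall>b\<in>?Cs. h (sg_mul (sg_prod (cd T) (cd (Kg ?P))) a b) = sg_mul (cd R) (h a) (h b)"
    proof (intro ballI)
      fix x y assume x: "x \<in> ?Cs" and y: "y \<in> ?Cs"
      show "h (sg_mul (sg_prod (cd T) (cd (Kg ?P))) x y) = sg_mul (cd R) (h x) (h y)"
      proof (cases "x \<in> code ` sd_E R \<and> y \<in> code ` sd_E R")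
        case True
        then obtain r r' where rr: "r \<in> sd_E R" "r' \<in> sd_E R" "x = code r" "y = code r'" by auto
        show ?thesis using codemul[OF rr(1,2)] rr F(5) hcode h0 by auto
      next
        case False
        then obtain x1 x2 y1 y2 where xy: "x = prod_encode (x1,x2)" "y = prod_encode (y1,y2)"
          "x2 = 0 \<or> y2 = 0" "x2 = 0 \<longrightarrow> h x = 0" "y2 = 0 \<longrightarrow> h y = 0"
          using x y h0 unfolding code_def by auto
        then show ?thesis using h0 by auto
      qed
    qed
  qed
qed

lemma cd_quotient:
  assumes pv: "pv_sg V" and fR: "fin_sgd R" and cR: "cd R \<in> V"
    and mor: "sgd_morph R S qv qe" and bij: "bij_betw qv (sd_V R) (sd_V S)" and surj: "qe ` sd_E R = sd_E S"
  shows "cd S \<in> V"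
proof -
  note M = morphD[OF mor]
  note F = fin_sgdD[OF fR]
  have inj: "inj_on qv (sd_V R)" using bij by (simp add: bij_betw_def)
  define h where "h = (\<lambda>y. if y = 0 then 0 else Suc (qe (y - 1)))"
  show ?thesis
  proof (rule pv_quot[OF pv cR, where Cs="sg_car (cd R)" and h=h])
    show "sg_car (cd R) \<subseteq> sg_car (cd R)" by simp
    show "sg_car (cd R) \<noteq> {}" using cd_0_car by blast
    show "\<forall>a\<in>sg_car (cd R). \<forall>b\<in>sg_car (cd R). sg_mul (cd R) a b \<in> sg_car (cd R)"
      using cd_closed[OF fR] by auto
    show "h ` sg_car (cd R) = sg_car (cd S)"
    proof
      show "h ` sg_car (cd R) \<subseteq> sg_car (cd S)" using surj unfolding h_def by (auto simp: cd_car)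
      show "sg_car (cd S) \<subseteq> h ` sg_car (cd R)"
      proof
        fix y assume "y \<in> sg_car (cd S)"
        then consider "y = 0" | s where "s \<in> sd_E S" "y = Suc s" by (auto simp: cd_car)
        then show "y \<in> h ` sg_car (cd R)"
        proof cases
          case 1 then show ?thesis by (intro image_eqI[where x=0]) (auto simp: h_def)
        next
          case (2 s)
          then obtain r where "r \<in> sd_E R" "s = qe r" using surj by auto
          then show ?thesis using 2 by (intro image_eqI[where x="Suc r"]) (auto simp: h_def cd_car)
        qed
      qed
    qed
    show "\<forall>a\<in>sg_car (cd R). \<forall>b\<in>sg_car (cd R). h (sg_mul (cd R) a b) = sg_mul (cd S) (h a) (h b)"
    proof (intro ballI)
      fix x y assume "x \<in> sg_car (cd R)" "y \<in> sg_car (cd R)"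
      then consider "x = 0" | "y = 0" | r r' where "r \<in> sd_E R" "r' \<in> sd_E R" "x = Suc r" "y = Suc r'"
        by (auto simp: cd_car)
      then show "h (sg_mul (cd R) x y) = sg_mul (cd S) (h x) (h y)"
      proof cases
        case 1 then show ?thesis by (simp add: h_def)
      next
        case 2 then show ?thesis by (simp add: h_def)
      next
        case (3 r r')
        show ?thesis
        proof (cases "sd_src R r = sd_tgt R r'")
          case True then show ?thesis using 3 M(3,4,5) by (simp add: h_def)
        next
          case False
          then have "qv (sd_src R r) \<noteq> qv (sd_tgt R r')" using inj F(3,4) 3 by (meson inj_onD)
          then show ?thesis using 3 M(3,4) False by (simp add: h_def)
        qed
      qed
    qed
  qed
qed

lemma pv_sgd_div: "pv_sgd C \<Longrightarrow> T \<in> C \<Longrightarrow> fin_sgd S \<Longrightarrow> sgd_divides S T \<Longrightarrow> S \<in> C"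
  using pv_sgd_def[THEN iffD1, THEN conjunct2, THEN conjunct1] by blast
lemma pv_sgd_prod: "pv_sgd C \<Longrightarrow> S \<in> C \<Longrightarrow> T \<in> C \<Longrightarrow> sgd_prod S T \<in> C"
  using pv_sgd_def[THEN iffD1, THEN conjunct2, THEN conjunct2, THEN conjunct1] by blast

lemma gV_div: assumes "T \<in> gV V" "fin_sgd S" "sgd_divides S T" shows "S \<in> gV V"
  using assms pv_sgd_div unfolding gV_def by blast
lemma gV_prod: assumes "S \<in> gV V" "T \<in> gV V" shows "sgd_prod S T \<in> gV V"
  using assms pv_sgd_prod unfolding gV_def by blast
lemma gV_base: assumes "S \<in> V" shows "sg_as_sgd S \<in> gV V"
  using assms unfolding gV_def by blast

lemma fin_sgd_as: "fin_sg S \<Longrightarrow> fin_sgd (sg_as_sgd S)"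
  unfolding fin_sgd_def fin_sg_def sg_as_sgd_def by simp

lemma claimA:
  assumes pv: "pv_sg V" and B2: "B2 \<in> V" and S: "S \<in> gV V"
  shows "fin_sgd S \<and> cd S \<in> V"
proof -
  define D where "D = {S. fin_sgd S \<and> cd S \<in> V}"
  have "pv_sgd D"
    unfolding pv_sgd_def
  proof (intro conjI allI ballI impI)
    show "\<And>S. S \<in> D \<Longrightarrow> fin_sgd S" unfolding D_def by simp
  next
    fix S T assume a: "T \<in> D \<and> fin_sgd S \<and> sgd_divides S T"
    then obtain R qv qe fv fe where R: "fin_sgd R" "sgd_morph R S qv qe" "bij_betw qv (sd_V R) (sd_V S)"
      "qe ` sd_E R = sd_E S" "sgd_morph R T fv fe"
      "\<forall>r\<in>sd_E R. \<forall>r'\<in>sd_E R. sd_src R r = sd_src R r' \<and> sd_tgt R r = sd_tgt R r' \<and> fe r = fe r' \<longrightarrow> r = r'"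
      unfolding sgd_divides_def by blast
    have "cd R \<in> V" using cd_faithful[OF pv B2 R(1) _ _ R(5,6)] a unfolding D_def by simp
    then have "cd S \<in> V" using cd_quotient[OF pv R(1) _ R(2,3,4)] by simp
    then show "S \<in> D" using a unfolding D_def by simp
  next
    fix S T assume "S \<in> D" "T \<in> D"
    then show "sgd_prod S T \<in> D" unfolding D_def using cd_prod[OF pv] fin_sgd_prod by simp
  next
    fix S T assume "S \<in> D" "T \<in> D"
    then show "sgd_coprod S T \<in> D" unfolding D_def using cd_coprod[OF pv] fin_sgd_coprod by simp
  qed
  moreover have "sg_as_sgd ` V \<subseteq> D"
    unfolding D_def using cd_base[OF pv _ B2] fin_sgd_as pv_fin[OF pv] by auto
  ultimately have "S \<in> D" using S unfolding gV_def by blast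
  then show ?thesis unfolding D_def by simp
qed

lemma EdgesG_iff: "(u, v, \<pi>) \<in> EdgesG C A \<longleftrightarrow> u \<in> gverts A \<and> v \<in> gverts A \<and>
      \<pi> \<in> PiE (idxG C A) (\<lambda>i. sd_E (fst i)) \<and>
      (\<forall>S \<phi>v \<phi>e. (S, \<phi>v, \<phi>e) \<in> idxG C A \<longrightarrow>
          sd_src S (\<pi> (S, \<phi>v, \<phi>e)) = \<phi>v u \<and> sd_tgt S (\<pi> (S, \<phi>v, \<phi>e)) = \<phi>v v) \<and>
      (\<forall>S \<phi>v \<phi>e T \<psi>v \<psi>e hv he. (S, \<phi>v, \<phi>e) \<in> idxG C A \<and> (T, \<psi>v, \<psi>e) \<in> idxG C A \<and>
          sgd_morph S T hv he \<and> (\<forall>x\<in>gverts A. hv (\<phi>v x) = \<psi>v x) \<and>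
          (\<forall>e\<in>gedges A. he (\<phi>e e) = \<psi>e e) \<longrightarrow>
          he (\<pi> (S, \<phi>v, \<phi>e)) = \<pi> (T, \<psi>v, \<psi>e))"
  unfolding EdgesG_def by simp

lemma idxG_iff: "(S, \<phi>v, \<phi>e) \<in> idxG C A \<longleftrightarrow> S \<in> C \<and> \<phi>v \<in> PiE (gverts A) (\<lambda>_. sd_V S) \<and>
      \<phi>e \<in> PiE (gedges A) (\<lambda>_. sd_E S) \<and>
      (\<forall>e\<in>gedges A. sd_src S (\<phi>e e) = \<phi>v (gsrc A e) \<and> sd_tgt S (\<phi>e e) = \<phi>v (gtgt A e))"
  unfolding idxG_def by simp

lemma idxV_iff: "(S, \<phi>) \<in> idxV V X \<longleftrightarrow> S \<in> V \<and> \<phi> \<in> PiE X (\<lambda>_. sg_car S)"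
  unfolding idxV_def by simp

lemma OmegaV_iff: "\<pi> \<in> OmegaV V X \<longleftrightarrow> \<pi> \<in> PiE (idxV V X) (\<lambda>i. sg_car (fst i)) \<and>
     (\<forall>S \<phi> T \<psi> h. (S, \<phi>) \<in> idxV V X \<and> (T, \<psi>) \<in> idxV V X \<and> sg_hom S T h \<and>
        (\<forall>x\<in>X. h (\<phi> x) = \<psi> x) \<longrightarrow> h (\<pi> (S, \<phi>)) = \<pi> (T, \<psi>))"
  unfolding OmegaV_def by simp

definition morphG :: "('v, 'e) graph \<Rightarrow> ('v, 'e) sidx \<Rightarrow> ('v, 'e) sidx \<Rightarrow> (nat \<Rightarrow> nat) \<Rightarrow> (nat \<Rightarrow> nat) \<Rightarrow> bool" where
  "morphG A j i hv he \<longleftrightarrow> sgd_morph (fst j) (fst i) hv he \<and> (\<forall>x\<in>gverts A. hv (fst (snd j) x) = fst (snd i) x) \<and>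
     (\<forall>e\<in>gedges A. he (snd (snd j) e) = snd (snd i) e)"

lemma EdgesG_compat:
  assumes "x \<in> EdgesG C A" "j \<in> idxG C A" "i \<in> idxG C A" "morphG A j i hv he"
  shows "he (snd (snd x) j) = snd (snd x) i"
proof -
  obtain u v \<pi> where x: "x = (u, v, \<pi>)" by (cases x) auto
  obtain S \<phi>v \<phi>e where j: "j = (S, \<phi>v, \<phi>e)" by (cases j) auto
  obtain T \<psi>v \<psi>e where i: "i = (T, \<psi>v, \<psi>e)" by (cases i) auto
  show ?thesis using assms unfolding x i j EdgesG_iff morphG_def by auto
qed

lemma EdgesG_edge:
  assumes "x \<in> EdgesG C A" "j \<in> idxG C A"
  shows "snd (snd x) j \<in> sd_E (fst j)" "sd_src (fst j) (snd (snd x) j) = fst (snd j) (e_src x)"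
    "sd_tgt (fst j) (snd (snd x) j) = fst (snd j) (e_tgt x)"
    "e_src x \<in> gverts A" "e_tgt x \<in> gverts A"
proof -
  obtain u v \<pi> where x: "x = (u, v, \<pi>)" by (cases x) auto
  obtain S \<phi>v \<phi>e where j: "j = (S, \<phi>v, \<phi>e)" by (cases j) auto
  show "snd (snd x) j \<in> sd_E (fst j)" "sd_src (fst j) (snd (snd x) j) = fst (snd j) (e_src x)"
    "sd_tgt (fst j) (snd (snd x) j) = fst (snd j) (e_tgt x)"
    "e_src x \<in> gverts A" "e_tgt x \<in> gverts A"
    using assms unfolding x j EdgesG_iff e_src_def e_tgt_def by (auto simp: PiE_iff)
qed

lemma EdgesG_ext: "x \<in> EdgesG C A \<Longrightarrow> snd (snd x) \<in> PiE (idxG C A) (\<lambda>i. sd_E (fst i))"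
  by (cases x) (simp add: EdgesG_iff)

lemma idxG_D:
  assumes "j \<in> idxG C A"
  shows "fst j \<in> C" "fst (snd j) \<in> PiE (gverts A) (\<lambda>_. sd_V (fst j))"
    "snd (snd j) \<in> PiE (gedges A) (\<lambda>_. sd_E (fst j))"
    "\<And>e. e \<in> gedges A \<Longrightarrow> sd_src (fst j) (snd (snd j) e) = fst (snd j) (gsrc A e)"
    "\<And>e. e \<in> gedges A \<Longrightarrow> sd_tgt (fst j) (snd (snd j) e) = fst (snd j) (gtgt A e)"
  using assms by (cases j; auto simp: idxG_iff)+

lemma morph_comp:
  assumes "sgd_morph S T hv he" "sgd_morph T U hv' he'"
  shows "sgd_morph S U (hv' \<circ> hv) (he' \<circ> he)"
proof -
  note M1 = morphD[OF assms(1)] and M2 = morphD[OF assms(2)]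
  show ?thesis unfolding sgd_morph_def
  proof (intro conjI ballI impI)
    show "hv' \<circ> hv \<in> sd_V S \<rightarrow> sd_V U" using M1(1) M2(1) by auto
    show "he' \<circ> he \<in> sd_E S \<rightarrow> sd_E U" using M1(2) M2(2) by auto
  next
    fix s assume s: "s \<in> sd_E S"
    show "sd_src U ((he' \<circ> he) s) = (hv' \<circ> hv) (sd_src S s)" using s M1(2,3) M2(3) by simp
    show "sd_tgt U ((he' \<circ> he) s) = (hv' \<circ> hv) (sd_tgt S s)" using s M1(2,4) M2(4) by simp
  next
    fix s t assume st: "s \<in> sd_E S" "t \<in> sd_E S" "sd_src S s = sd_tgt S t"
    then have "sd_src T (he s) = sd_tgt T (he t)" using M1(3,4) by simp
    then show "(he' \<circ> he) (sd_mul S s t) = sd_mul U ((he' \<circ> he) s) ((he' \<circ> he) t)"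
      using st M1(2,5) M2(5) by simp
  qed
qed

lemma morphG_comp: "morphG A j k hv he \<Longrightarrow> morphG A k i hv' he' \<Longrightarrow> morphG A j i (hv' \<circ> hv) (he' \<circ> he)"
  unfolding morphG_def using morph_comp by auto

definition prodidx :: "('v, 'e) graph \<Rightarrow> ('v, 'e) sidx \<Rightarrow> ('v, 'e) sidx \<Rightarrow> ('v, 'e) sidx" where
  "prodidx A j i = (sgd_prod (fst j) (fst i), restrict (\<lambda>v. prod_encode (fst (snd j) v, fst (snd i) v)) (gverts A),
      restrict (\<lambda>e. prod_encode (snd (snd j) e, snd (snd i) e)) (gedges A))"

lemma prodidx_in: assumes gr: "is_graph A" and "j \<in> idxG (gV V) A" "i \<in> idxG (gV V) A" shows "prodidx A j i \<in> idxG (gV V) A"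
proof -
  note J = idxG_D[OF assms(2)] and I = idxG_D[OF assms(3)]
  show ?thesis unfolding prodidx_def idxG_iff using J I gV_prod[OF J(1) I(1)] gr unfolding is_graph_def
    by (auto simp: PiE_iff)
qed

lemma morph_fst: "fin_sgd S \<Longrightarrow> fin_sgd T \<Longrightarrow> sgd_morph (sgd_prod S T) S (\<lambda>n. fst (prod_decode n)) (\<lambda>n. fst (prod_decode n))"
  unfolding sgd_morph_def by auto
lemma morph_snd: "fin_sgd S \<Longrightarrow> fin_sgd T \<Longrightarrow> sgd_morph (sgd_prod S T) T (\<lambda>n. snd (prod_decode n)) (\<lambda>n. snd (prod_decode n))"
  unfolding sgd_morph_def by auto

lemma morph_id: "fin_sgd S \<Longrightarrow> sgd_morph S S id id"
  unfolding sgd_morph_def using fin_sgdD by auto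

lemma morphG_fst: assumes "fin_sgd (fst j)" "fin_sgd (fst i)"
  shows "morphG A (prodidx A j i) j (\<lambda>n. fst (prod_decode n)) (\<lambda>n. fst (prod_decode n))"
  unfolding morphG_def prodidx_def using morph_fst[OF assms] by simp
lemma morphG_snd: assumes "fin_sgd (fst j)" "fin_sgd (fst i)"
  shows "morphG A (prodidx A j i) i (\<lambda>n. snd (prod_decode n)) (\<lambda>n. snd (prod_decode n))"
  unfolding morphG_def prodidx_def using morph_snd[OF assms] by simp

lemma C4:
  assumes pv: "pv_sg V" and B2: "B2 \<in> V" and gr: "is_graph A" and fin: "finite F"
  shows "F \<subseteq> idxG (gV V) A \<Longrightarrow> j1 \<in> idxG (gV V) A \<Longrightarrow>
     \<exists>j0\<in>idxG (gV V) A. \<forall>i\<in>insert j1 F. \<exists>hv he. morphG A j0 i hv he"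
  using fin
proof (induction F rule: finite_induct)
  case empty
  have "fin_sgd (fst j1)" using claimA[OF pv B2 idxG_D(1)[OF empty(2)]] by simp
  then have "morphG A j1 j1 id id" unfolding morphG_def using morph_id by simp
  then show ?case using empty by blast
next
  case (insert i F)
  have "\<exists>j0\<in>idxG (gV V) A. \<forall>i\<in>insert j1 F. \<exists>hv he. morphG A j0 i hv he"
    using insert.IH insert.prems by blast
  then obtain j0 where j0: "j0 \<in> idxG (gV V) A" "\<forall>i\<in>insert j1 F. \<exists>hv he. morphG A j0 i hv he" by blast
  have i: "i \<in> idxG (gV V) A" using insert by auto
  have f0: "fin_sgd (fst j0)" using claimA[OF pv B2 idxG_D(1)[OF j0(1)]] by simp
  have fi: "fin_sgd (fst i)" using claimA[OF pv B2 idxG_D(1)[OF i]] by simp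
  show ?case
  proof (intro bexI ballI)
    show "prodidx A j0 i \<in> idxG (gV V) A" by (rule prodidx_in[OF gr j0(1) i])
    fix k assume k: "k \<in> insert j1 (insert i F)"
    show "\<exists>hv he. morphG A (prodidx A j0 i) k hv he"
    proof (cases "k = i")
      case True then show ?thesis using morphG_snd[OF f0 fi] by blast
    next
      case False
      then obtain hv he where "morphG A j0 k hv he" using j0(2) k by auto
      then show ?thesis using morphG_comp[OF morphG_fst[OF f0 fi]] by blast
    qed
  qed
qed

definition encV :: "('v, 'e) graph \<Rightarrow> 'v \<Rightarrow> nat" where "encV A = to_nat_on (gverts A)"

definition Kidx :: "('v, 'e) graph \<Rightarrow> ('v, 'e) sidx" where
  "Kidx A = (Kg (encV A ` gverts A), restrict (encV A) (gverts A),
             restrict (\<lambda>e. prod_encode (encV A (gtgt A e), encV A (gsrc A e))) (gedges A))"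

definition cdidx :: "('v, 'e) graph \<Rightarrow> ('v, 'e) sidx \<Rightarrow> fsg \<times> ('e \<Rightarrow> nat)" where
  "cdidx A j = (cd (fst j), restrict (\<lambda>e. Suc (snd (snd j) e)) (gedges A))"

inductive_set gpaths :: "fsgd set \<Rightarrow> ('v, 'e) graph \<Rightarrow> ('v, 'e) fedge set" for C A where
  gp_gen: "e \<in> gedges A \<Longrightarrow> genG C A e \<in> gpaths C A"
| gp_mul: "x \<in> gpaths C A \<Longrightarrow> y \<in> gpaths C A \<Longrightarrow> e_src x = e_tgt y \<Longrightarrow> mulG C A x y \<in> gpaths C A"

lemma encV_inj: "finite (gverts A) \<Longrightarrow> inj_on (encV A) (gverts A)"
  unfolding encV_def by (intro inj_on_to_nat_on countable_finite)

lemma Kg_div: assumes "finite P" shows "sgd_divides (Kg P) (sg_as_sgd B2)"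
  unfolding sgd_divides_def
proof (intro exI conjI)
  show "fin_sgd (Kg P)" using fin_sgd_Kg[OF assms] .
  show "sgd_morph (Kg P) (Kg P) id id" using morph_id[OF fin_sgd_Kg[OF assms]] .
  show "bij_betw id (sd_V (Kg P)) (sd_V (Kg P))" by simp
  show "id ` sd_E (Kg P) = sd_E (Kg P)" by simp
  show "sgd_morph (Kg P) (sg_as_sgd B2) (\<lambda>_. 0) (\<lambda>_. 0)"
    unfolding sgd_morph_def sg_as_sgd_def by (simp add: B2_car B2_mul)
  show "\<forall>r\<in>sd_E (Kg P). \<forall>r'\<in>sd_E (Kg P). sd_src (Kg P) r = sd_src (Kg P) r' \<and> sd_tgt (Kg P) r = sd_tgt (Kg P) r' \<and> 0 = 0 \<longrightarrow> r = r'"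
    by auto
qed

lemma Kg_in: assumes "B2 \<in> V" "finite P" shows "Kg P \<in> gV V"
  using gV_div[OF gV_base[OF assms(1)] fin_sgd_Kg[OF assms(2)] Kg_div[OF assms(2)]] .

lemma Kidx_in: assumes "is_graph A" "finite (gverts A)" "B2 \<in> V" shows "Kidx A \<in> idxG (gV V) A"
  unfolding Kidx_def idxG_iff using Kg_in[OF assms(3)] assms(1,2) unfolding is_graph_def
  by (auto simp: PiE_iff)

lemma Kg_edge: "s \<in> sd_E (Kg P) \<Longrightarrow> s = prod_encode (sd_tgt (Kg P) s, sd_src (Kg P) s)"
  by auto

lemma cdidx_in: assumes "pv_sg V" "B2 \<in> V" "j \<in> idxG (gV V) A" shows "cdidx A j \<in> idxV V (gedges A)"
  using claimA[OF assms(1,2) idxG_D(1)[OF assms(3)]] idxG_D(3)[OF assms(3)]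
  unfolding cdidx_def idxV_iff by (auto simp: PiE_iff cd_car)

lemma genG_in: assumes "is_graph A" "e \<in> gedges A" shows "genG C A e \<in> EdgesG C A"
  unfolding genG_def EdgesG_iff using assms unfolding is_graph_def
  by (auto simp: PiE_iff idxG_iff)

lemma genG_simps: "e_src (genG C A e) = gsrc A e" "e_tgt (genG C A e) = gtgt A e"
  "j \<in> idxG C A \<Longrightarrow> snd (snd (genG C A e)) j = snd (snd j) e"
  unfolding genG_def e_src_def e_tgt_def by auto

lemma mulG_simps: "e_src (mulG C A x y) = e_src y" "e_tgt (mulG C A x y) = e_tgt x"
  "j \<in> idxG C A \<Longrightarrow> snd (snd (mulG C A x y)) j = sd_mul (fst j) (snd (snd x) j) (snd (snd y) j)"
  unfolding mulG_def e_src_def e_tgt_def by auto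

lemma EdgesG_verts: "x \<in> EdgesG C A \<Longrightarrow> e_src x \<in> gverts A \<and> e_tgt x \<in> gverts A"
  by (cases x) (simp add: EdgesG_iff e_src_def e_tgt_def)

lemma mulG_in:
  assumes pv: "pv_sg V" and B2: "B2 \<in> V" and x: "x \<in> EdgesG (gV V) A" and y: "y \<in> EdgesG (gV V) A"
    and c: "e_src x = e_tgt y"
  shows "mulG (gV V) A x y \<in> EdgesG (gV V) A"
proof -
  have fs: "\<And>j. j \<in> idxG (gV V) A \<Longrightarrow> fin_sgd (fst j)" using claimA[OF pv B2] idxG_D(1) by blast
  have comp: "\<And>j. j \<in> idxG (gV V) A \<Longrightarrow> sd_src (fst j) (snd (snd x) j) = sd_tgt (fst j) (snd (snd y) j)"
    using EdgesG_edge[OF x] EdgesG_edge[OF y] c by simp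
  have inE: "\<And>j. j \<in> idxG (gV V) A \<Longrightarrow> sd_mul (fst j) (snd (snd x) j) (snd (snd y) j) \<in> sd_E (fst j)"
    using fin_sgdD(5)[OF fs] EdgesG_edge(1)[OF x] EdgesG_edge(1)[OF y] comp by blast
  show ?thesis
    unfolding mulG_def EdgesG_iff
  proof (intro conjI allI impI)
    show "e_src y \<in> gverts A" "e_tgt x \<in> gverts A" using EdgesG_verts[OF y] EdgesG_verts[OF x] by auto
    show "(\<lambda>i\<in>idxG (gV V) A. sd_mul (fst i) (snd (snd x) i) (snd (snd y) i)) \<in> (\<Pi>\<^sub>E i\<in>idxG (gV V) A. sd_E (fst i))"
      using inE by (auto simp: PiE_iff)
  next
    fix S \<phi>v \<phi>e assume j: "(S, \<phi>v, \<phi>e) \<in> idxG (gV V) A"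
    note X = EdgesG_edge[OF x j] and Y = EdgesG_edge[OF y j]
    show "sd_src S ((\<lambda>i\<in>idxG (gV V) A. sd_mul (fst i) (snd (snd x) i) (snd (snd y) i)) (S, \<phi>v, \<phi>e)) = \<phi>v (e_src y)"
      "sd_tgt S ((\<lambda>i\<in>idxG (gV V) A. sd_mul (fst i) (snd (snd x) i) (snd (snd y) i)) (S, \<phi>v, \<phi>e)) = \<phi>v (e_tgt x)"
      using j X Y fin_sgdD(6,7)[OF fs[OF j]] comp[OF j] by auto
  next
    fix S \<phi>v \<phi>e T \<psi>v \<psi>e hv he
    assume a: "(S, \<phi>v, \<phi>e) \<in> idxG (gV V) A \<and> (T, \<psi>v, \<psi>e) \<in> idxG (gV V) A \<and>
          sgd_morph S T hv he \<and> (\<forall>x\<in>gverts A. hv (\<phi>v x) = \<psi>v x) \<and> (\<forall>e\<in>gedges A. he (\<phi>e e) = \<psi>e e)"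
    then have j: "(S, \<phi>v, \<phi>e) \<in> idxG (gV V) A" and i: "(T, \<psi>v, \<psi>e) \<in> idxG (gV V) A"
      and m: "morphG A (S, \<phi>v, \<phi>e) (T, \<psi>v, \<psi>e) hv he" unfolding morphG_def by auto
    have "he (sd_mul S (snd (snd x) (S, \<phi>v, \<phi>e)) (snd (snd y) (S, \<phi>v, \<phi>e))) =
          sd_mul T (he (snd (snd x) (S, \<phi>v, \<phi>e))) (he (snd (snd y) (S, \<phi>v, \<phi>e)))"
      using morphD(5)[of S T hv he] a EdgesG_edge(1)[OF x j] EdgesG_edge(1)[OF y j] comp[OF j] by auto
    also have "\<dots> = sd_mul T (snd (snd x) (T, \<psi>v, \<psi>e)) (snd (snd y) (T, \<psi>v, \<psi>e))"
      using EdgesG_compat[OF x j i m] EdgesG_compat[OF y j i m] by simp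
    finally show "he ((\<lambda>i\<in>idxG (gV V) A. sd_mul (fst i) (snd (snd x) i) (snd (snd y) i)) (S, \<phi>v, \<phi>e)) =
       (\<lambda>i\<in>idxG (gV V) A. sd_mul (fst i) (snd (snd x) i) (snd (snd y) i)) (T, \<psi>v, \<psi>e)"
      using i j by simp
  qed
qed

inductive pathval :: "fsgd \<Rightarrow> ('e \<Rightarrow> nat) \<Rightarrow> ('v, 'e) graph \<Rightarrow> nat \<Rightarrow> 'v \<Rightarrow> 'v \<Rightarrow> bool" for S \<phi>e A where
  pg: "e \<in> gedges A \<Longrightarrow> pathval S \<phi>e A (\<phi>e e) (gsrc A e) (gtgt A e)"
| pm: "pathval S \<phi>e A s a b \<Longrightarrow> pathval S \<phi>e A t c a \<Longrightarrow> pathval S \<phi>e A (sd_mul S s t) c b"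

definition subidx :: "('v, 'e) graph \<Rightarrow> ('v, 'e) sidx \<Rightarrow> ('v, 'e) sidx" where
  "subidx A j = ((fst j)\<lparr>sd_E := {s. \<exists>a b. pathval (fst j) (snd (snd j)) A s a b}\<rparr>, fst (snd j), snd (snd j))"

lemma topG_space: "topspace (topG C A) = EdgesG C A"
proof -
  have "EdgesG C A \<subseteq> topspace (prod_topology (discrete_topology (gverts A))
       (prod_topology (discrete_topology (gverts A))
         (product_topology (\<lambda>i. discrete_topology (sd_E (fst i))) (idxG C A))))"
  proof
    fix x assume "x \<in> EdgesG C A"
    then show "x \<in> topspace (prod_topology (discrete_topology (gverts A))
       (prod_topology (discrete_topology (gverts A))
         (product_topology (\<lambda>i. discrete_topology (sd_E (fst i))) (idxG C A))))"
      by (cases x) (auto simp: EdgesG_iff)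
  qed
  then show ?thesis unfolding topG_def by auto
qed

lemma topV_space: "topspace (topV V X) = OmegaV V X"
  unfolding topV_def using OmegaV_def by auto

locale setting =
  fixes A :: "('v, 'e) graph" and V :: "fsg set"
    and \<gamma> :: "('v, 'e) fedge \<Rightarrow> ((fsg \<times> ('e \<Rightarrow> nat)) \<Rightarrow> nat)"
  assumes graph: "is_graph A"
    and finV: "finite (gverts A)"
    and pv: "pv_sg V"
    and B2: "B2 \<in> V"
    and maps: "\<gamma> \<in> EdgesG (gV V) A \<rightarrow> OmegaV V (gedges A)"
    and cont: "continuous_map (topG (gV V) A) (topV V (gedges A)) \<gamma>"
    and hom: "\<forall>x\<in>EdgesG (gV V) A. \<forall>y\<in>EdgesG (gV V) A. e_src x = e_tgt y \<longrightarrow>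
                \<gamma> (mulG (gV V) A x y) = mulV V (gedges A) (\<gamma> x) (\<gamma> y)"
    and gen: "\<forall>e\<in>gedges A. \<gamma> (genG (gV V) A e) = genV V (gedges A) e"
begin

lemma fsI: "j \<in> idxG (gV V) A \<Longrightarrow> fin_sgd (fst j)" using claimA[OF pv B2] idxG_D(1) by blast

lemma gpaths_prop:
  assumes "y \<in> gpaths (gV V) A"
  shows "y \<in> EdgesG (gV V) A \<and> (\<forall>j\<in>idxG (gV V) A. \<gamma> y (cdidx A j) = Suc (snd (snd y) j))"
  using assms
proof (induction y rule: gpaths.induct)
  case (gp_gen e)
  have "\<forall>j\<in>idxG (gV V) A. \<gamma> (genG (gV V) A e) (cdidx A j) = Suc (snd (snd (genG (gV V) A e)) j)"
  proof
    fix j assume j: "j \<in> idxG (gV V) A"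
    have "\<gamma> (genG (gV V) A e) (cdidx A j) = genV V (gedges A) e (cdidx A j)" using gen gp_gen by simp
    also have "\<dots> = Suc (snd (snd j) e)" using cdidx_in[OF pv B2 j] gp_gen unfolding genV_def cdidx_def by simp
    finally show "\<gamma> (genG (gV V) A e) (cdidx A j) = Suc (snd (snd (genG (gV V) A e)) j)"
      using genG_simps(3)[OF j] by simp
  qed
  then show ?case using genG_in[OF graph gp_gen] by simp
next
  case (gp_mul x y)
  have x: "x \<in> EdgesG (gV V) A" and y: "y \<in> EdgesG (gV V) A" using gp_mul by auto
  have "\<forall>j\<in>idxG (gV V) A. \<gamma> (mulG (gV V) A x y) (cdidx A j) = Suc (snd (snd (mulG (gV V) A x y)) j)"
  proof
    fix j assume j: "j \<in> idxG (gV V) A"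
    have comp: "sd_src (fst j) (snd (snd x) j) = sd_tgt (fst j) (snd (snd y) j)"
      using EdgesG_edge[OF x j] EdgesG_edge[OF y j] gp_mul by simp
    have "\<gamma> (mulG (gV V) A x y) (cdidx A j) = mulV V (gedges A) (\<gamma> x) (\<gamma> y) (cdidx A j)" using hom x y gp_mul by simp
    also have "\<dots> = sg_mul (cd (fst j)) (\<gamma> x (cdidx A j)) (\<gamma> y (cdidx A j))"
      using cdidx_in[OF pv B2 j] unfolding mulV_def by (simp add: cdidx_def)
    also have "\<dots> = Suc (sd_mul (fst j) (snd (snd x) j) (snd (snd y) j))" using gp_mul j comp by simp
    finally show "\<gamma> (mulG (gV V) A x y) (cdidx A j) = Suc (snd (snd (mulG (gV V) A x y)) j)"
      using mulG_simps(3)[OF j] by simp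
  qed
  then show ?case using mulG_in[OF pv B2 x y] gp_mul by simp
qed

end

context setting begin

lemma encV_inj': "inj_on (encV A) (gverts A)" by (rule encV_inj[OF finV])

lemma pathval_props:
  assumes j0: "j0 \<in> idxG (gV V) A" and mK: "morphG A j0 (Kidx A) hvK heK"
    and p: "pathval (fst j0) (snd (snd j0)) A s a b"
  shows "s \<in> sd_E (fst j0) \<and> sd_src (fst j0) s = fst (snd j0) a \<and> sd_tgt (fst j0) s = fst (snd j0) b \<and>
         a \<in> gverts A \<and> b \<in> gverts A \<and> heK s = prod_encode (encV A b, encV A a)"
  using p
proof (induction rule: pathval.induct)
  case (pg e)
  have "heK (snd (snd j0) e) = snd (snd (Kidx A)) e" using mK pg unfolding morphG_def by blast
  then show ?case using idxG_D(3,4,5)[OF j0] pg graph unfolding is_graph_def Kidx_def by (auto simp: PiE_iff)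
next
  case (pm s a b t c)
  note F = fin_sgdD[OF fsI[OF j0]]
  have M: "sgd_morph (fst j0) (fst (Kidx A)) hvK heK" using mK unfolding morphG_def by blast
  have comp: "sd_src (fst j0) s = sd_tgt (fst j0) t" using pm by simp
  have "heK (sd_mul (fst j0) s t) = sd_mul (fst (Kidx A)) (heK s) (heK t)"
    using morphD(5)[OF M] pm comp by blast
  then show ?case using pm F(5,6,7) comp unfolding Kidx_def by simp
qed

lemma pathval_gpath:
  assumes j0: "j0 \<in> idxG (gV V) A" and p: "pathval (fst j0) (snd (snd j0)) A s a b"
  shows "\<exists>y\<in>gpaths (gV V) A. e_src y = a \<and> e_tgt y = b \<and> snd (snd y) j0 = s"
  using p
proof (induction rule: pathval.induct)
  case (pg e)
  have "genG (gV V) A e \<in> gpaths (gV V) A" using gpaths.gp_gen[OF pg] .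
  moreover have "e_src (genG (gV V) A e) = gsrc A e" "e_tgt (genG (gV V) A e) = gtgt A e"
    unfolding genG_def e_src_def e_tgt_def by simp_all
  moreover have "snd (snd (genG (gV V) A e)) j0 = snd (snd j0) e" using genG_simps(3)[OF j0] by simp
  ultimately show ?case by blast
next
  case (pm s a b t c)
  then obtain y1 y2 where y: "y1 \<in> gpaths (gV V) A" "e_src y1 = a" "e_tgt y1 = b" "snd (snd y1) j0 = s"
    "y2 \<in> gpaths (gV V) A" "e_src y2 = c" "e_tgt y2 = a" "snd (snd y2) j0 = t" by blast
  have "mulG (gV V) A y1 y2 \<in> gpaths (gV V) A" using gpaths.gp_mul[OF y(1,5)] y(2,7) by simp
  moreover have "e_src (mulG (gV V) A y1 y2) = c" "e_tgt (mulG (gV V) A y1 y2) = b"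
    using y unfolding mulG_def e_src_def e_tgt_def by simp_all
  moreover have "snd (snd (mulG (gV V) A y1 y2)) j0 = sd_mul (fst j0) s t" using y mulG_simps(3)[OF j0] by simp
  ultimately show ?case by blast
qed

lemma sub_props:
  assumes j0: "j0 \<in> idxG (gV V) A" and mK: "morphG A j0 (Kidx A) hvK heK"
  shows "subidx A j0 \<in> idxG (gV V) A \<and> morphG A (subidx A j0) j0 id id"
proof -
  obtain S \<phi>v \<phi>e where j0e: "j0 = (S, \<phi>v, \<phi>e)" by (cases j0) auto
  define Sub where "Sub = S\<lparr>sd_E := {s. \<exists>a b. pathval S \<phi>e A s a b}\<rparr>"
  have si: "subidx A j0 = (Sub, \<phi>v, \<phi>e)" unfolding subidx_def Sub_def j0e by simp
  note F = fin_sgdD[OF fsI[OF j0]]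
  note P = pathval_props[OF j0 mK]
  have M: "sgd_morph S (fst (Kidx A)) hvK heK" using mK unfolding morphG_def j0e by simp
  have subE: "sd_E Sub \<subseteq> sd_E S" using P unfolding Sub_def j0e by auto
  have h1: "finite (sd_V Sub)" "finite (sd_E Sub)" using F(1,2) subE finite_subset unfolding Sub_def j0e by auto
  have h3: "\<forall>s\<in>sd_E Sub. sd_src Sub s \<in> sd_V Sub \<and> sd_tgt Sub s \<in> sd_V Sub"
  proof
    fix s assume "s \<in> sd_E Sub"
    then have "s \<in> sd_E S" using subE by blast
    then show "sd_src Sub s \<in> sd_V Sub \<and> sd_tgt Sub s \<in> sd_V Sub" using F(3,4) unfolding Sub_def j0e by simp
  qed
  have h4: "\<forall>s\<in>sd_E Sub. \<forall>t\<in>sd_E Sub. sd_src Sub s = sd_tgt Sub t \<longrightarrow>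
        sd_mul Sub s t \<in> sd_E Sub \<and> sd_src Sub (sd_mul Sub s t) = sd_src Sub t \<and>
        sd_tgt Sub (sd_mul Sub s t) = sd_tgt Sub s"
  proof (intro ballI impI)
    fix s t assume st: "s \<in> sd_E Sub" "t \<in> sd_E Sub" "sd_src Sub s = sd_tgt Sub t"
    then obtain a b c a' where p: "pathval S \<phi>e A s a b" "pathval S \<phi>e A t c a'" unfolding Sub_def by auto
    have Ps: "s \<in> sd_E S" "sd_src S s = \<phi>v a" "a \<in> gverts A" "heK s = prod_encode (encV A b, encV A a)"
      using P p(1) unfolding j0e by auto
    have Pt: "t \<in> sd_E S" "sd_tgt S t = \<phi>v a'" "a' \<in> gverts A" "heK t = prod_encode (encV A a', encV A c)"
      using P p(2) unfolding j0e by auto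
    have comp: "sd_src S s = sd_tgt S t" using st unfolding Sub_def by simp
    have "sd_src (fst (Kidx A)) (heK s) = hvK (sd_src S s)" "sd_tgt (fst (Kidx A)) (heK t) = hvK (sd_tgt S t)"
      using morphD(3,4)[OF M] Ps(1) Pt(1) by auto
    then have "encV A a = encV A a'" using Ps Pt comp unfolding Kidx_def by simp
    then have "a = a'" using encV_inj' Ps(3) Pt(3) by (meson inj_onD)
    then have p2: "pathval S \<phi>e A t c a" using p(2) by simp
    have "pathval S \<phi>e A (sd_mul S s t) c b" using pathval.pm[OF p(1) p2] .
    then show "sd_mul Sub s t \<in> sd_E Sub \<and> sd_src Sub (sd_mul Sub s t) = sd_src Sub t \<and>
        sd_tgt Sub (sd_mul Sub s t) = sd_tgt Sub s"
      using F(6,7) Ps(1) Pt(1) comp unfolding Sub_def j0e by auto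
  qed
  have h5: "\<forall>s\<in>sd_E Sub. \<forall>t\<in>sd_E Sub. \<forall>r\<in>sd_E Sub.
        sd_src Sub s = sd_tgt Sub t \<and> sd_src Sub t = sd_tgt Sub r \<longrightarrow>
        sd_mul Sub (sd_mul Sub s t) r = sd_mul Sub s (sd_mul Sub t r)"
  proof (intro ballI impI)
    fix s t r assume "s \<in> sd_E Sub" "t \<in> sd_E Sub" "r \<in> sd_E Sub"
      "sd_src Sub s = sd_tgt Sub t \<and> sd_src Sub t = sd_tgt Sub r"
    then have "s \<in> sd_E S" "t \<in> sd_E S" "r \<in> sd_E S" using subE by blast+
    then show "sd_mul Sub (sd_mul Sub s t) r = sd_mul Sub s (sd_mul Sub t r)"
      using F(8) \<open>sd_src Sub s = sd_tgt Sub t \<and> sd_src Sub t = sd_tgt Sub r\<close> unfolding Sub_def j0e by simp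
  qed
  have fSub: "fin_sgd Sub" unfolding fin_sgd_def using h1 h3 h4 h5 by (intro conjI) (assumption+)
  have subE': "\<And>s a b. pathval S \<phi>e A s a b \<Longrightarrow> s \<in> sd_E S" using P unfolding j0e by simp
  have mSub: "sgd_morph Sub S id id"
    unfolding sgd_morph_def using subE' fin_sgdD[OF fSub] unfolding Sub_def by auto
  have "sgd_divides Sub S"
    unfolding sgd_divides_def
    by (intro exI[of _ Sub] exI[of _ id] conjI) (auto simp: fSub morph_id[OF fSub] mSub)
  then have SubC: "Sub \<in> gV V" using gV_div[OF idxG_D(1)[OF j0] fSub] unfolding j0e by simp
  have idx: "(Sub, \<phi>v, \<phi>e) \<in> idxG (gV V) A"
    unfolding idxG_iff
  proof (intro conjI ballI)
    show "Sub \<in> gV V" by (rule SubC)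
    show "\<phi>v \<in> gverts A \<rightarrow>\<^sub>E sd_V Sub" using idxG_D(2)[OF j0] unfolding Sub_def j0e by simp
    show "\<phi>e \<in> gedges A \<rightarrow>\<^sub>E sd_E Sub" using idxG_D(3)[OF j0] pathval.pg[of _ A S \<phi>e]
      unfolding Sub_def j0e by (auto simp: PiE_iff)
  next
    fix e assume "e \<in> gedges A"
    then show "sd_src Sub (\<phi>e e) = \<phi>v (gsrc A e)" "sd_tgt Sub (\<phi>e e) = \<phi>v (gtgt A e)"
      using idxG_D(4,5)[OF j0] unfolding Sub_def j0e by auto
  qed
  have "morphG A (Sub, \<phi>v, \<phi>e) j0 id id" unfolding morphG_def j0e using mSub by simp
  then show ?thesis using idx si by simp
qed

lemma approx_path:
  assumes x: "x \<in> EdgesG (gV V) A" and j0: "j0 \<in> idxG (gV V) A" and mK: "morphG A j0 (Kidx A) hvK heK"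
  shows "\<exists>y\<in>gpaths (gV V) A. e_src y = e_src x \<and> e_tgt y = e_tgt x \<and> snd (snd y) j0 = snd (snd x) j0"
proof -
  note S = sub_props[OF j0 mK]
  have "snd (snd x) j0 = id (snd (snd x) (subidx A j0))"
    using EdgesG_compat[OF x _ j0, of "subidx A j0" id id] S by simp
  then have "snd (snd x) j0 \<in> sd_E (fst (subidx A j0))" using EdgesG_edge(1)[OF x] S by simp
  then obtain a b where p: "pathval (fst j0) (snd (snd j0)) A (snd (snd x) j0) a b" unfolding subidx_def by auto
  note P = pathval_props[OF j0 mK p]
  have Kin: "Kidx A \<in> idxG (gV V) A" by (rule Kidx_in[OF graph finV B2])
  have "heK (snd (snd x) j0) = snd (snd x) (Kidx A)" using EdgesG_compat[OF x j0 Kin mK] .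
  moreover have "snd (snd x) (Kidx A) = prod_encode (encV A (e_tgt x), encV A (e_src x))"
  proof -
    note E = EdgesG_edge[OF x Kin]
    have "snd (snd x) (Kidx A) = prod_encode (sd_tgt (fst (Kidx A)) (snd (snd x) (Kidx A)), sd_src (fst (Kidx A)) (snd (snd x) (Kidx A)))"
      using E(1) unfolding Kidx_def by auto
    then show ?thesis using E(2,3,4,5) unfolding Kidx_def by simp
  qed
  ultimately have "heK (snd (snd x) j0) = prod_encode (encV A (e_tgt x), encV A (e_src x))" by simp
  moreover have "heK (snd (snd x) j0) = prod_encode (encV A b, encV A a)" using P by (elim conjE)
  ultimately have "prod_encode (encV A b, encV A a) = prod_encode (encV A (e_tgt x), encV A (e_src x))" by simp
  then have eq: "encV A b = encV A (e_tgt x)" "encV A a = encV A (e_src x)" by simp_all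
  have ab: "a \<in> gverts A" "b \<in> gverts A" using P by simp_all
  have "b = e_tgt x" using inj_onD[OF encV_inj' eq(1) ab(2)] EdgesG_verts[OF x] by blast
  moreover have "a = e_src x" using inj_onD[OF encV_inj' eq(2) ab(1)] EdgesG_verts[OF x] by blast
  moreover obtain y where "y \<in> gpaths (gV V) A" "e_src y = a \<and> e_tgt y = b \<and> snd (snd y) j0 = snd (snd x) j0"
    using pathval_gpath[OF j0 p] by (rule bexE)
  ultimately show ?thesis by (intro bexI[of _ y]) simp_all
qed

end

context setting begin

lemma proj_cont:
  assumes c: "c \<in> idxV V (gedges A)"
  shows "continuous_map (topV V (gedges A)) (discrete_topology (sg_car (fst c))) (\<lambda>a. a c)"
  unfolding topV_def
  by (rule continuous_map_from_subtopology[OF continuous_map_product_projection[OF c]])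

lemma L2:
  assumes x: "x \<in> EdgesG (gV V) A" and j: "j \<in> idxG (gV V) A"
  shows "\<gamma> x (cdidx A j) = Suc (snd (snd x) j)"
proof -
  let ?c = "cdidx A j"
  have cJ: "?c \<in> idxV V (gedges A)" by (rule cdidx_in[OF pv B2 j])
  have c1: "continuous_map (topG (gV V) A) (discrete_topology (sg_car (fst ?c))) (\<lambda>y. \<gamma> y ?c)"
    using continuous_map_compose[OF cont proj_cont[OF cJ]] by (simp add: o_def)
  have gx: "\<gamma> x \<in> OmegaV V (gedges A)" using maps x by auto
  have gxc: "\<gamma> x ?c \<in> sg_car (fst ?c)" using gx cJ unfolding OmegaV_iff by (auto simp: PiE_iff)
  define N where "N = {y \<in> topspace (topG (gV V) A). \<gamma> y ?c \<in> {\<gamma> x ?c}}"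
  have oN: "openin (topG (gV V) A) N" unfolding N_def
    by (rule openin_continuous_map_preimage[OF c1]) (simp add: gxc)
  then obtain T where T: "openin (prod_topology (discrete_topology (gverts A))
       (prod_topology (discrete_topology (gverts A))
         (product_topology (\<lambda>i. discrete_topology (sd_E (fst i))) (idxG (gV V) A)))) T" "N = T \<inter> EdgesG (gV V) A"
    unfolding topG_def openin_subtopology by blast
  have xN: "x \<in> N" unfolding N_def topG_space[of "gV V" A] using x by simp
  obtain u v \<pi> where xe: "x = (u, v, \<pi>)" by (cases x) auto
  have mem: "(u, (v, \<pi>)) \<in> T" using xN T(2) xe by simp
  obtain U1 W where UW: "openin (prod_topology (discrete_topology (gverts A))
         (product_topology (\<lambda>i. discrete_topology (sd_E (fst i))) (idxG (gV V) A))) W"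
      "u \<in> U1" "(v, \<pi>) \<in> W" "U1 \<times> W \<subseteq> T"
    using iffD1[OF openin_prod_topology_alt T(1), rule_format, OF mem] by (elim exE conjE) simp
  obtain U2 U3 where U23: "openin (product_topology (\<lambda>i. discrete_topology (sd_E (fst i))) (idxG (gV V) A)) U3"
      "v \<in> U2" "\<pi> \<in> U3" "U2 \<times> U3 \<subseteq> W"
    using iffD1[OF openin_prod_topology_alt UW(1), rule_format, OF UW(3)] by (elim exE conjE) simp
  obtain U where U: "finite {i \<in> idxG (gV V) A. U i \<noteq> topspace (discrete_topology (sd_E (fst i)))}"
      "\<pi> \<in> PiE (idxG (gV V) A) U" "PiE (idxG (gV V) A) U \<subseteq> U3"
    using iffD1[OF openin_product_topology_alt U23(1), rule_format, OF U23(3)] by (elim exE conjE) simp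
  define F where "F = {i \<in> idxG (gV V) A. U i \<noteq> sd_E (fst i)}"
  have finF: "finite (insert j F)" using U(1) unfolding F_def by simp
  have FI: "insert j F \<subseteq> idxG (gV V) A" using j unfolding F_def by auto
  have Kin: "Kidx A \<in> idxG (gV V) A" by (rule Kidx_in[OF graph finV B2])
  obtain j0 where j0: "j0 \<in> idxG (gV V) A" "\<forall>i\<in>insert (Kidx A) (insert j F). \<exists>hv he. morphG A j0 i hv he"
    using C4[OF pv B2 graph finF FI Kin] by blast
  obtain hvK heK where mK: "morphG A j0 (Kidx A) hvK heK" using j0(2) by blast
  obtain y where y: "y \<in> gpaths (gV V) A" "e_src y = e_src x \<and> e_tgt y = e_tgt x \<and> snd (snd y) j0 = snd (snd x) j0"
    using approx_path[OF x j0(1) mK] by (rule bexE)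
  have yE: "y \<in> EdgesG (gV V) A" and gy: "\<gamma> y ?c = Suc (snd (snd y) j)" using gpaths_prop[OF y(1)] j by auto
  have agree: "snd (snd y) i = snd (snd x) i" if i: "i \<in> insert j F" for i
  proof -
    obtain hv he where m: "morphG A j0 i hv he" using j0(2) i by blast
    have iI: "i \<in> idxG (gV V) A" using FI i by blast
    have "snd (snd y) i = he (snd (snd y) j0)" using EdgesG_compat[OF yE j0(1) iI m] by simp
    also have "\<dots> = he (snd (snd x) j0)" using y(2) by simp
    also have "\<dots> = snd (snd x) i" using EdgesG_compat[OF x j0(1) iI m] .
    finally show ?thesis .
  qed
  have ye: "y = (u, v, snd (snd y))" using y(2) xe unfolding e_src_def e_tgt_def by (cases y) auto
  have "snd (snd y) \<in> PiE (idxG (gV V) A) U"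
    unfolding PiE_iff
  proof (intro conjI ballI)
    fix i assume i: "i \<in> idxG (gV V) A"
    show "snd (snd y) i \<in> U i"
    proof (cases "i \<in> F")
      case True
      then have "snd (snd y) i = \<pi> i" using agree xe by simp
      then show ?thesis using U(2) i by (auto simp: PiE_iff)
    next
      case False
      then have "U i = sd_E (fst i)" using i unfolding F_def by simp
      then show ?thesis using EdgesG_edge(1)[OF yE i] by simp
    qed
  next
    show "snd (snd y) \<in> extensional (idxG (gV V) A)" using EdgesG_ext[OF yE] by (simp add: PiE_iff)
  qed
  then have "snd (snd y) \<in> U3" using U(3) by blast
  then have "(v, snd (snd y)) \<in> W" using U23 by blast
  then have "(u, v, snd (snd y)) \<in> T" using UW by blast
  then have "y \<in> N" using T(2) ye yE by simp
  then have "\<gamma> y ?c = \<gamma> x ?c" unfolding N_def by simp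
  then show ?thesis using gy agree[of j] by simp
qed

end

lemma OM_compat:
  assumes a: "a \<in> OmegaV V X" and "(S, \<phi>) \<in> idxV V X" "(T, \<psi>) \<in> idxV V X" "sg_hom S T h" "\<forall>x\<in>X. h (\<phi> x) = \<psi> x"
  shows "h (a (S, \<phi>)) = a (T, \<psi>)"
proof -
  have "\<forall>S \<phi> T \<psi> h. (S, \<phi>) \<in> idxV V X \<and> (T, \<psi>) \<in> idxV V X \<and> sg_hom S T h \<and>
        (\<forall>x\<in>X. h (\<phi> x) = \<psi> x) \<longrightarrow> h (a (S, \<phi>)) = a (T, \<psi>)" using a unfolding OmegaV_iff by (elim conjE)
  then show ?thesis using assms(2-5) by blast
qed

lemma OM_val: "a \<in> OmegaV V X \<Longrightarrow> i \<in> idxV V X \<Longrightarrow> a i \<in> sg_car (fst i)"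
  unfolding OmegaV_iff by (auto simp: PiE_iff)

lemma OM_ext: "a \<in> OmegaV V X \<Longrightarrow> a \<in> extensional (idxV V X)"
  unfolding OmegaV_iff by (auto simp: PiE_iff)

lemma sg_hom_fst: "sg_hom (sg_prod S T) S (\<lambda>n. fst (prod_decode n))" unfolding sg_hom_def by auto
lemma sg_hom_snd: "sg_hom (sg_prod S T) T (\<lambda>n. snd (prod_decode n))" unfolding sg_hom_def by auto
lemma sg_hom_incl: "C \<subseteq> sg_car S \<Longrightarrow> sg_hom \<lparr>sg_car = C, sg_mul = sg_mul S\<rparr> S id" unfolding sg_hom_def by auto

context setting begin

lemma Kin: "Kidx A \<in> idxG (gV V) A" by (rule Kidx_in[OF graph finV B2])

lemma Kidx_lab: "e \<in> gedges A \<Longrightarrow> snd (snd (Kidx A)) e = prod_encode (encV A (gtgt A e), encV A (gsrc A e))"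
  unfolding Kidx_def by simp

lemma W_lemma:
  assumes a: "a \<in> OmegaV V (gedges A)" and aK: "a (cdidx A (Kidx A)) \<noteq> 0" and j: "j \<in> idxG (gV V) A"
  shows "\<exists>s p q. a (cdidx A j) = Suc s \<and> s \<in> sd_E (fst j) \<and> sd_src (fst j) s = fst (snd j) q \<and>
      sd_tgt (fst j) s = fst (snd j) p \<and> p \<in> gverts A \<and> q \<in> gverts A \<and>
      a (cdidx A (Kidx A)) = Suc (prod_encode (encV A p, encV A q))"
proof -
  obtain S \<phi>v \<phi>e where je: "j = (S, \<phi>v, \<phi>e)" by (cases j) auto
  define K where "K = Kg (encV A ` gverts A)"
  have fK: "fst (Kidx A) = K" unfolding K_def Kidx_def by simp
  have fS: "fin_sgd S" using fsI[OF j] je by simp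
  have cS: "cd S \<in> V" using claimA[OF pv B2 idxG_D(1)[OF j]] je by simp
  have cK: "cd K \<in> V" using claimA[OF pv B2 idxG_D(1)[OF Kin]] fK by simp
  have fKK: "fin_sgd K" unfolding K_def using fin_sgd_Kg finV by simp
  note F = fin_sgdD[OF fS]
  note J = idxG_D[OF j, unfolded je fst_conv snd_conv]
  have inj: "inj_on (encV A) (gverts A)" by (rule encV_inj')
  define P where "P = sg_prod (cd S) (cd K)"
  define Cw where "Cw = {prod_encode (Suc s, Suc (prod_encode (encV A p, encV A q))) |s p q.
        s \<in> sd_E S \<and> p \<in> gverts A \<and> q \<in> gverts A \<and> sd_src S s = \<phi>v q \<and> sd_tgt S s = \<phi>v p}
      \<union> {prod_encode (x, 0) |x. x \<in> sg_car (cd S)}"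
  have PV: "P \<in> V" unfolding P_def by (rule pv_prod[OF pv cS cK])
  have CwP: "Cw \<subseteq> sg_car P" unfolding Cw_def P_def K_def by (auto simp: cd_car)
  have Cwne: "Cw \<noteq> {}" using cd_0_car[of S] unfolding Cw_def by blast
  have Kmul: "sg_mul (cd K) (Suc (prod_encode (encV A p1, encV A q1))) (Suc (prod_encode (encV A p2, encV A q2)))
     = (if q1 = p2 then Suc (prod_encode (encV A p1, encV A q2)) else 0)"
    if "q1 \<in> gverts A" "p2 \<in> gverts A" for p1 q1 p2 q2
    using inj_onD[OF inj _ that] unfolding K_def by auto
  have Cwcl: "\<forall>x\<in>Cw. \<forall>y\<in>Cw. sg_mul P x y \<in> Cw"
  proof (intro ballI)
    fix x y assume x: "x \<in> Cw" and y: "y \<in> Cw"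
    show "sg_mul P x y \<in> Cw"
    proof (cases "x \<in> {prod_encode (x, 0) |x. x \<in> sg_car (cd S)} \<or> y \<in> {prod_encode (x, 0) |x. x \<in> sg_car (cd S)}")
      case True
      have xc: "x \<in> sg_car P" "y \<in> sg_car P" using x y CwP by auto
      then obtain x1 x2 y1 y2 where "x = prod_encode (x1, x2)" "y = prod_encode (y1, y2)"
        "x1 \<in> sg_car (cd S)" "y1 \<in> sg_car (cd S)" "x2 = 0 \<or> y2 = 0"
        using True unfolding P_def by auto
      then show ?thesis unfolding Cw_def P_def using cd_closed[OF fS] by auto
    next
      case False
      then obtain s p1 q1 s' p2 q2 where xy: "x = prod_encode (Suc s, Suc (prod_encode (encV A p1, encV A q1)))"
        "s \<in> sd_E S" "p1 \<in> gverts A" "q1 \<in> gverts A" "sd_src S s = \<phi>v q1" "sd_tgt S s = \<phi>v p1"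
        "y = prod_encode (Suc s', Suc (prod_encode (encV A p2, encV A q2)))"
        "s' \<in> sd_E S" "p2 \<in> gverts A" "q2 \<in> gverts A" "sd_src S s' = \<phi>v q2" "sd_tgt S s' = \<phi>v p2"
        using x y unfolding Cw_def by blast
      show ?thesis
      proof (cases "q1 = p2")
        case True
        then have c: "sd_src S s = sd_tgt S s'" using xy by simp
        then show ?thesis using xy True Kmul[OF xy(4) xy(9)] F(5,6,7) unfolding Cw_def P_def by auto
      next
        case False
        have "Suc s \<in> sg_car (cd S)" "Suc s' \<in> sg_car (cd S)" using xy(2,8) by (simp_all add: cd_car)
        then have "sg_mul (cd S) (Suc s) (Suc s') \<in> sg_car (cd S)" by (rule cd_closed[OF fS])
        then show ?thesis using xy False Kmul[OF xy(4) xy(9)] unfolding Cw_def P_def by auto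
      qed
    qed
  qed
  define Wsg where "Wsg = \<lparr>sg_car = Cw, sg_mul = sg_mul P\<rparr>"
  have WV: "Wsg \<in> V" unfolding Wsg_def by (rule pv_sub[OF pv PV CwP Cwne Cwcl])
  define \<psi>W where "\<psi>W = restrict (\<lambda>e. prod_encode (Suc (\<phi>e e), Suc (prod_encode (encV A (gtgt A e), encV A (gsrc A e))))) (gedges A)"
  have \<psi>Cw: "\<psi>W e \<in> Cw" if e: "e \<in> gedges A" for e
  proof -
    have "\<phi>e e \<in> sd_E S" "gtgt A e \<in> gverts A" "gsrc A e \<in> gverts A"
      using J(3) e graph unfolding is_graph_def by (auto simp: PiE_iff)
    then show ?thesis unfolding \<psi>W_def Cw_def using e J(4,5) by auto
  qed
  have iW: "(Wsg, \<psi>W) \<in> idxV V (gedges A)" unfolding idxV_iff using WV \<psi>Cw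
    by (auto simp: PiE_iff Wsg_def \<psi>W_def)
  have iP: "(P, \<psi>W) \<in> idxV V (gedges A)" unfolding idxV_iff using PV \<psi>Cw CwP
    by (auto simp: PiE_iff \<psi>W_def)
  have cj: "cdidx A j = (cd S, restrict (\<lambda>e. Suc (\<phi>e e)) (gedges A))" unfolding cdidx_def je by simp
  have cK': "cdidx A (Kidx A) = (cd K, restrict (\<lambda>e. Suc (prod_encode (encV A (gtgt A e), encV A (gsrc A e)))) (gedges A))"
    unfolding cdidx_def Kidx_def K_def by (auto simp: restrict_def)
  have ij: "cdidx A j \<in> idxV V (gedges A)" by (rule cdidx_in[OF pv B2 j])
  have iK: "cdidx A (Kidx A) \<in> idxV V (gedges A)" by (rule cdidx_in[OF pv B2 Kin])
  have "id (a (Wsg, \<psi>W)) = a (P, \<psi>W)"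
    by (rule OM_compat[OF a iW iP]) (simp_all add: Wsg_def sg_hom_incl[OF CwP, unfolded id_def])
  then have aP: "a (P, \<psi>W) \<in> Cw" using OM_val[OF a iW] by (simp add: Wsg_def)
  have a1: "fst (prod_decode (a (P, \<psi>W))) = a (cdidx A j)"
    using OM_compat[OF a iP ij[unfolded cj], of "\<lambda>n. fst (prod_decode n)"] sg_hom_fst[of "cd S" "cd K"] cj
    unfolding P_def \<psi>W_def by simp
  have a2: "snd (prod_decode (a (P, \<psi>W))) = a (cdidx A (Kidx A))"
    using OM_compat[OF a iP iK[unfolded cK'], of "\<lambda>n. snd (prod_decode n)"] sg_hom_snd[of "cd S" "cd K"] cK'
    unfolding P_def \<psi>W_def by simp
  from aP obtain s p q where sp: "a (P, \<psi>W) = prod_encode (Suc s, Suc (prod_encode (encV A p, encV A q)))"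
        "s \<in> sd_E S" "p \<in> gverts A" "q \<in> gverts A" "sd_src S s = \<phi>v q" "sd_tgt S s = \<phi>v p"
    using aK a2 unfolding Cw_def by auto
  show ?thesis using sp a1 a2 je by (intro exI[of _ s] exI[of _ p] exI[of _ q]) auto
qed

end

definition gmap :: "fsgd set \<Rightarrow> ('v, 'e) graph \<Rightarrow> ((fsg \<times> ('e \<Rightarrow> nat)) \<Rightarrow> nat) \<Rightarrow> ('v, 'e) fedge" where
  "gmap C A a = (inv_into (gverts A) (encV A) (snd (prod_decode (a (cdidx A (Kidx A)) - 1))),
     inv_into (gverts A) (encV A) (fst (prod_decode (a (cdidx A (Kidx A)) - 1))),
     restrict (\<lambda>j. a (cdidx A j) - 1) (idxG C A))"

context setting begin

lemma W2:
  assumes a: "a \<in> OmegaV V (gedges A)" and aK: "a (cdidx A (Kidx A)) \<noteq> 0"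
    and j: "j \<in> idxG (gV V) A" and i: "i \<in> idxG (gV V) A" and m: "morphG A j i hv he"
  shows "a (cdidx A i) = Suc (he (a (cdidx A j) - 1))"
proof -
  obtain S \<phi>v \<phi>e where je: "j = (S, \<phi>v, \<phi>e)" by (cases j) auto
  obtain T \<psi>v \<psi>e where ie: "i = (T, \<psi>v, \<psi>e)" by (cases i) auto
  have M: "sgd_morph S T hv he" and lab: "\<And>e. e \<in> gedges A \<Longrightarrow> he (\<phi>e e) = \<psi>e e"
    using m unfolding morphG_def je ie by auto
  note Mo = morphD[OF M]
  have fS: "fin_sgd S" using fsI[OF j] je by simp
  have fT: "fin_sgd T" using fsI[OF i] ie by simp
  have cS: "cd S \<in> V" using claimA[OF pv B2 idxG_D(1)[OF j]] je by simp
  have cT: "cd T \<in> V" using claimA[OF pv B2 idxG_D(1)[OF i]] ie by simp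
  note F = fin_sgdD[OF fS]
  note J = idxG_D[OF j, unfolded je fst_conv snd_conv]
  note I = idxG_D[OF i, unfolded ie fst_conv snd_conv]
  obtain s where s: "a (cdidx A j) = Suc s" "s \<in> sd_E S" using W_lemma[OF a aK j] je by auto
  obtain t where t: "a (cdidx A i) = Suc t" using W_lemma[OF a aK i] by auto
  define P where "P = sg_prod (cd S) (cd T)"
  define Cw where "Cw = {prod_encode (Suc s, Suc (he s)) |s. s \<in> sd_E S}
      \<union> {prod_encode (x, y) |x y. x \<in> sg_car (cd S) \<and> y \<in> sg_car (cd T) \<and> (x = 0 \<or> y = 0)}"
  have PV: "P \<in> V" unfolding P_def by (rule pv_prod[OF pv cS cT])
  have CwP: "Cw \<subseteq> sg_car P" unfolding Cw_def P_def using Mo(2) by (auto simp: cd_car)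
  have Cwne: "Cw \<noteq> {}" using cd_0_car[of S] cd_0_car[of T] unfolding Cw_def by blast
  have Cwcl: "\<forall>x\<in>Cw. \<forall>y\<in>Cw. sg_mul P x y \<in> Cw"
  proof (intro ballI)
    fix x y assume x: "x \<in> Cw" and y: "y \<in> Cw"
    have xc: "x \<in> sg_car P" "y \<in> sg_car P" using x y CwP by auto
    then obtain x1 x2 y1 y2 where xy: "x = prod_encode (x1, x2)" "y = prod_encode (y1, y2)"
        "x1 \<in> sg_car (cd S)" "y1 \<in> sg_car (cd S)" "x2 \<in> sg_car (cd T)" "y2 \<in> sg_car (cd T)"
      unfolding P_def by auto
    have m1: "sg_mul (cd S) x1 y1 \<in> sg_car (cd S)" "sg_mul (cd T) x2 y2 \<in> sg_car (cd T)"
      using cd_closed[OF fS xy(3,4)] cd_closed[OF fT xy(5,6)] by auto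
    show "sg_mul P x y \<in> Cw"
    proof (cases "x1 = 0 \<or> x2 = 0 \<or> y1 = 0 \<or> y2 = 0")
      case True
      then show ?thesis using xy m1 unfolding Cw_def P_def by auto
    next
      case False
      then obtain r r' where rr: "r \<in> sd_E S" "r' \<in> sd_E S" "x = prod_encode (Suc r, Suc (he r))" "y = prod_encode (Suc r', Suc (he r'))"
        using x y xy unfolding Cw_def by auto
      show ?thesis
      proof (cases "sd_src S r = sd_tgt S r'")
        case True
        have "sd_src T (he r) = sd_tgt T (he r')" using Mo(3,4) rr True by simp
        then show ?thesis using rr True Mo(5) F(5) unfolding Cw_def P_def by auto
      next
        case False
        then show ?thesis using rr m1 xy unfolding Cw_def P_def by auto
      qed
    qed
  qed
  define Wsg where "Wsg = \<lparr>sg_car = Cw, sg_mul = sg_mul P\<rparr>"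
  have WV: "Wsg \<in> V" unfolding Wsg_def by (rule pv_sub[OF pv PV CwP Cwne Cwcl])
  define \<psi>W where "\<psi>W = restrict (\<lambda>e. prod_encode (Suc (\<phi>e e), Suc (\<psi>e e))) (gedges A)"
  have \<psi>Cw: "\<psi>W e \<in> Cw" if e: "e \<in> gedges A" for e
  proof -
    have "\<phi>e e \<in> sd_E S" using J(3) e by (auto simp: PiE_iff)
    then show ?thesis unfolding \<psi>W_def Cw_def using e lab[OF e] by force
  qed
  have iW: "(Wsg, \<psi>W) \<in> idxV V (gedges A)" unfolding idxV_iff using WV \<psi>Cw
    by (auto simp: PiE_iff Wsg_def \<psi>W_def)
  have iP: "(P, \<psi>W) \<in> idxV V (gedges A)" unfolding idxV_iff using PV \<psi>Cw CwP
    by (auto simp: PiE_iff \<psi>W_def)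
  have cj: "cdidx A j = (cd S, restrict (\<lambda>e. Suc (\<phi>e e)) (gedges A))" unfolding cdidx_def je by simp
  have ci: "cdidx A i = (cd T, restrict (\<lambda>e. Suc (\<psi>e e)) (gedges A))" unfolding cdidx_def ie by simp
  have ij: "cdidx A j \<in> idxV V (gedges A)" by (rule cdidx_in[OF pv B2 j])
  have ii: "cdidx A i \<in> idxV V (gedges A)" by (rule cdidx_in[OF pv B2 i])
  have "id (a (Wsg, \<psi>W)) = a (P, \<psi>W)"
    by (rule OM_compat[OF a iW iP]) (simp_all add: Wsg_def sg_hom_incl[OF CwP, unfolded id_def])
  then have aP: "a (P, \<psi>W) \<in> Cw" using OM_val[OF a iW] by (simp add: Wsg_def)
  have a1: "fst (prod_decode (a (P, \<psi>W))) = a (cdidx A j)"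
    using OM_compat[OF a iP ij[unfolded cj], of "\<lambda>n. fst (prod_decode n)"] sg_hom_fst[of "cd S" "cd T"] cj
    unfolding P_def \<psi>W_def by simp
  have a2: "snd (prod_decode (a (P, \<psi>W))) = a (cdidx A i)"
    using OM_compat[OF a iP ii[unfolded ci], of "\<lambda>n. snd (prod_decode n)"] sg_hom_snd[of "cd S" "cd T"] ci
    unfolding P_def \<psi>W_def by simp
  from aP have "\<exists>r. a (P, \<psi>W) = prod_encode (Suc r, Suc (he r))"
    using a1 a2 s(1) t unfolding Cw_def by auto
  then obtain r where "a (P, \<psi>W) = prod_encode (Suc r, Suc (he r))" by blast
  then show ?thesis using a1 a2 s(1) by simp
qed

end

context setting begin

abbreviation "Kc \<equiv> cdidx A (Kidx A)"

lemma gmap_verts: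
  assumes a: "a \<in> OmegaV V (gedges A)" and aK: "a Kc \<noteq> 0"
  shows "\<exists>p q. p \<in> gverts A \<and> q \<in> gverts A \<and> a Kc = Suc (prod_encode (encV A p, encV A q)) \<and>
     e_src (gmap (gV V) A a) = q \<and> e_tgt (gmap (gV V) A a) = p"
proof -
  obtain s p q where "a Kc = Suc (prod_encode (encV A p, encV A q))" "p \<in> gverts A" "q \<in> gverts A"
    using W_lemma[OF a aK Kin] by blast
  then show ?thesis unfolding gmap_def e_src_def e_tgt_def using inv_into_f_f[OF encV_inj'] by auto
qed

lemma gmap_in:
  assumes a: "a \<in> OmegaV V (gedges A)" and aK: "a Kc \<noteq> 0"
  shows "gmap (gV V) A a \<in> EdgesG (gV V) A"
proof -
  obtain p q where pq: "p \<in> gverts A" "q \<in> gverts A" "a Kc = Suc (prod_encode (encV A p, encV A q))"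
     "e_src (gmap (gV V) A a) = q" "e_tgt (gmap (gV V) A a) = p" using gmap_verts[OF a aK] by blast
  have ge: "gmap (gV V) A a = (q, p, restrict (\<lambda>j. a (cdidx A j) - 1) (idxG (gV V) A))"
    using pq(4,5) unfolding gmap_def e_src_def e_tgt_def by simp
  have W: "a (cdidx A j) - 1 \<in> sd_E (fst j) \<and> sd_src (fst j) (a (cdidx A j) - 1) = fst (snd j) q \<and>
      sd_tgt (fst j) (a (cdidx A j) - 1) = fst (snd j) p" if j: "j \<in> idxG (gV V) A" for j
  proof -
    obtain s p' q' where W: "a (cdidx A j) = Suc s" "s \<in> sd_E (fst j)" "sd_src (fst j) s = fst (snd j) q'"
      "sd_tgt (fst j) s = fst (snd j) p'" "p' \<in> gverts A" "q' \<in> gverts A"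
      "a Kc = Suc (prod_encode (encV A p', encV A q'))"
      using W_lemma[OF a aK j] by blast
    have "encV A p' = encV A p" "encV A q' = encV A q" using W(7) pq(3) by simp_all
    then have "p' = p" "q' = q" using inj_onD[OF encV_inj'] W(5,6) pq(1,2) by blast+
    then show ?thesis using W by simp
  qed
  show ?thesis unfolding ge EdgesG_iff
  proof (intro conjI allI impI)
    show "q \<in> gverts A" "p \<in> gverts A" using pq by auto
    show "(\<lambda>j\<in>idxG (gV V) A. a (cdidx A j) - 1) \<in> (\<Pi>\<^sub>E i\<in>idxG (gV V) A. sd_E (fst i))"
      using W by (auto simp: PiE_iff)
  next
    fix S \<phi>v \<phi>e assume j: "(S, \<phi>v, \<phi>e) \<in> idxG (gV V) A"
    show "sd_src S ((\<lambda>j\<in>idxG (gV V) A. a (cdidx A j) - 1) (S, \<phi>v, \<phi>e)) = \<phi>v q"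
      "sd_tgt S ((\<lambda>j\<in>idxG (gV V) A. a (cdidx A j) - 1) (S, \<phi>v, \<phi>e)) = \<phi>v p"
      using W[OF j] j by auto
  next
    fix S \<phi>v \<phi>e T \<psi>v \<psi>e hv he
    assume h: "(S, \<phi>v, \<phi>e) \<in> idxG (gV V) A \<and> (T, \<psi>v, \<psi>e) \<in> idxG (gV V) A \<and>
          sgd_morph S T hv he \<and> (\<forall>x\<in>gverts A. hv (\<phi>v x) = \<psi>v x) \<and> (\<forall>e\<in>gedges A. he (\<phi>e e) = \<psi>e e)"
    then have j: "(S, \<phi>v, \<phi>e) \<in> idxG (gV V) A" and i: "(T, \<psi>v, \<psi>e) \<in> idxG (gV V) A"
      and m: "morphG A (S, \<phi>v, \<phi>e) (T, \<psi>v, \<psi>e) hv he" unfolding morphG_def by auto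
    show "he ((\<lambda>j\<in>idxG (gV V) A. a (cdidx A j) - 1) (S, \<phi>v, \<phi>e)) = (\<lambda>j\<in>idxG (gV V) A. a (cdidx A j) - 1) (T, \<psi>v, \<psi>e)"
      using W2[OF a aK j i m] j i by simp
  qed
qed

lemma gamma_gmap:
  assumes a: "a \<in> OmegaV V (gedges A)" and aK: "a Kc \<noteq> 0"
  shows "\<gamma> (gmap (gV V) A a) = a"
proof -
  let ?x = "gmap (gV V) A a"
  have x: "?x \<in> EdgesG (gV V) A" by (rule gmap_in[OF a aK])
  have b: "\<gamma> ?x \<in> OmegaV V (gedges A)" using maps x by auto
  show ?thesis
  proof (rule extensionalityI[OF OM_ext[OF b] OM_ext[OF a]])
    fix i assume i: "i \<in> idxV V (gedges A)"
    obtain T \<psi> where ie: "i = (T, \<psi>)" by (cases i) auto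
    have T: "T \<in> V" "\<psi> \<in> PiE (gedges A) (\<lambda>_. sg_car T)" using i unfolding ie idxV_iff by auto
    define j where "j = (sg_as_sgd T, restrict (\<lambda>_. 0::nat) (gverts A), \<psi>)"
    have j: "j \<in> idxG (gV V) A" unfolding j_def idxG_iff using gV_base[OF T(1)] T(2) graph
      unfolding is_graph_def by (auto simp: sg_as_sgd_def PiE_iff)
    have cj: "cdidx A j = (cd (sg_as_sgd T), restrict (\<lambda>e. Suc (\<psi> e)) (gedges A))" unfolding cdidx_def j_def by simp
    have ij: "cdidx A j \<in> idxV V (gedges A)" by (rule cdidx_in[OF pv B2 j])
    have hom: "sg_hom T (cd (sg_as_sgd T)) Suc" unfolding sg_hom_def
      by (auto simp: cd_car sg_as_sgd_def)
    have c1: "\<And>c. c \<in> OmegaV V (gedges A) \<Longrightarrow> Suc (c (T, \<psi>)) = c (cdidx A j)"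
      using OM_compat[OF _ i[unfolded ie] ij[unfolded cj] hom] cj by simp
    obtain s where s: "a (cdidx A j) = Suc s" using W_lemma[OF a aK j] by blast
    have "\<gamma> ?x (cdidx A j) = Suc (snd (snd ?x) j)" by (rule L2[OF x j])
    also have "\<dots> = a (cdidx A j)" using s j unfolding gmap_def by simp
    finally have "Suc (\<gamma> ?x (T, \<psi>)) = Suc (a (T, \<psi>))" using c1[OF b] c1[OF a] by simp
    then show "\<gamma> ?x i = a i" using ie by simp
  qed
qed

lemma Kval:
  assumes x: "x \<in> EdgesG (gV V) A"
  shows "snd (snd x) (Kidx A) = prod_encode (encV A (e_tgt x), encV A (e_src x))"
proof -
  note E = EdgesG_edge[OF x Kin]
  have "snd (snd x) (Kidx A) = prod_encode (sd_tgt (fst (Kidx A)) (snd (snd x) (Kidx A)), sd_src (fst (Kidx A)) (snd (snd x) (Kidx A)))"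
    using E(1) unfolding Kidx_def by auto
  then show ?thesis using E(2,3,4,5) unfolding Kidx_def by simp
qed

lemma gamma_K: "x \<in> EdgesG (gV V) A \<Longrightarrow> \<gamma> x Kc = Suc (prod_encode (encV A (e_tgt x), encV A (e_src x)))"
  using L2[OF _ Kin] Kval by simp

lemma gmap_gamma:
  assumes x: "x \<in> EdgesG (gV V) A"
  shows "gmap (gV V) A (\<gamma> x) = x"
proof -
  have v: "e_src x \<in> gverts A" "e_tgt x \<in> gverts A" using EdgesG_verts[OF x] by auto
  have p: "restrict (\<lambda>j. \<gamma> x (cdidx A j) - 1) (idxG (gV V) A) = snd (snd x)"
  proof (rule extensionalityI[OF _ PiE_iff[THEN iffD1, OF EdgesG_ext[OF x], THEN conjunct2]])
    show "(\<lambda>j\<in>idxG (gV V) A. \<gamma> x (cdidx A j) - 1) \<in> extensional (idxG (gV V) A)" by simp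
    fix j assume "j \<in> idxG (gV V) A"
    then show "(\<lambda>j\<in>idxG (gV V) A. \<gamma> x (cdidx A j) - 1) j = snd (snd x) j" using L2[OF x] by simp
  qed
  show ?thesis unfolding gmap_def gamma_K[OF x] p using inv_into_f_f[OF encV_inj'] v
    by (cases x) (simp add: e_src_def e_tgt_def)
qed

lemma image_eq: "\<gamma> ` EdgesG (gV V) A = {a \<in> OmegaV V (gedges A). a Kc \<noteq> 0}"
proof
  show "\<gamma> ` EdgesG (gV V) A \<subseteq> {a \<in> OmegaV V (gedges A). a Kc \<noteq> 0}" using maps gamma_K by auto
  show "{a \<in> OmegaV V (gedges A). a Kc \<noteq> 0} \<subseteq> \<gamma> ` EdgesG (gV V) A"
  proof
    fix a assume "a \<in> {a \<in> OmegaV V (gedges A). a Kc \<noteq> 0}"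
    then show "a \<in> \<gamma> ` EdgesG (gV V) A" using gamma_gmap gmap_in by (intro image_eqI[where x="gmap (gV V) A a"]) auto
  qed
qed

end

lemma cont_via:
  assumes "continuous_map Z (discrete_topology U) p" "p \<in> topspace Z \<rightarrow> U'" "h \<in> (U \<inter> U') \<rightarrow> W"
  shows "continuous_map Z (discrete_topology W) (h \<circ> p)"
proof -
  have "continuous_map Z (subtopology (discrete_topology U) U') p"
    by (rule continuous_map_into_subtopology[OF assms(1,2)])
  then have "continuous_map Z (discrete_topology (U \<inter> U')) p" by simp
  moreover have "continuous_map (discrete_topology (U \<inter> U')) (discrete_topology W) h" using assms(3) by simp
  ultimately show ?thesis by (rule continuous_map_compose)
qed

context setting begin

abbreviation "Img \<equiv> {a \<in> OmegaV V (gedges A). a Kc \<noteq> 0}"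
abbreviation "ZZ \<equiv> subtopology (topV V (gedges A)) Img"

lemma KcJ: "Kc \<in> idxV V (gedges A)" by (rule cdidx_in[OF pv B2 Kin])

lemma ZZ_space: "topspace ZZ = Img" using topV_space by auto

lemma Img_open: "openin (topV V (gedges A)) Img"
proof -
  let ?P = "product_topology (\<lambda>i. discrete_topology (sg_car (fst i))) (idxV V (gedges A))"
  have c: "continuous_map ?P (discrete_topology (sg_car (fst Kc))) (\<lambda>f. f Kc)"
    by (rule continuous_map_product_projection[OF KcJ])
  have o: "openin ?P {f \<in> topspace ?P. f Kc \<in> sg_car (fst Kc) - {0}}"
    by (rule openin_continuous_map_preimage[OF c]) simp
  have "Img = {f \<in> topspace ?P. f Kc \<in> sg_car (fst Kc) - {0}} \<inter> OmegaV V (gedges A)"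
  proof -
    have "\<And>a. a \<in> OmegaV V (gedges A) \<Longrightarrow> a \<in> topspace ?P \<and> a Kc \<in> sg_car (fst Kc)"
      using OM_val[OF _ KcJ] unfolding OmegaV_iff by auto
    then show ?thesis by (intro set_eqI) auto
  qed
  then show ?thesis unfolding topV_def openin_subtopology using o by blast
qed

lemma g_cont: "continuous_map ZZ (topG (gV V) A) (gmap (gV V) A)"
proof -
  define G1 where "G1 = (\<lambda>a::((fsg \<times> ('e \<Rightarrow> nat)) \<Rightarrow> nat). inv_into (gverts A) (encV A) (snd (prod_decode (a Kc - 1))))"
  define G2 where "G2 = (\<lambda>a::((fsg \<times> ('e \<Rightarrow> nat)) \<Rightarrow> nat). inv_into (gverts A) (encV A) (fst (prod_decode (a Kc - 1))))"
  define G3 where "G3 = (\<lambda>a::((fsg \<times> ('e \<Rightarrow> nat)) \<Rightarrow> nat). restrict (\<lambda>j. a (cdidx A j) - 1) (idxG (gV V) A))"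
  have eq: "gmap (gV V) A = (\<lambda>a. (G1 a, G2 a, G3 a))" unfolding G1_def G2_def G3_def by (rule ext) (simp add: gmap_def)
  have pK: "continuous_map ZZ (discrete_topology (sg_car (fst Kc))) (\<lambda>a. a Kc)"
    by (rule continuous_map_from_subtopology[OF proj_cont[OF KcJ]])
  have pKnz: "(\<lambda>a. a Kc) \<in> topspace ZZ \<rightarrow> {n. n \<noteq> 0}" using ZZ_space by auto
  have Kcar: "n - 1 \<in> prod_encode ` (encV A ` gverts A \<times> encV A ` gverts A)" if "n \<in> sg_car (fst Kc)" "n \<noteq> 0" for n
    using that unfolding cdidx_def Kidx_def by (auto simp: cd_car)
  have c1: "continuous_map ZZ (discrete_topology (gverts A)) G1"
  proof -
    have "(\<lambda>n. inv_into (gverts A) (encV A) (snd (prod_decode (n - 1)))) \<in> (sg_car (fst Kc) \<inter> {n. n \<noteq> 0}) \<rightarrow> gverts A"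
    proof
      fix n assume "n \<in> sg_car (fst Kc) \<inter> {n. n \<noteq> 0}"
      then obtain p q where pq: "p \<in> gverts A" "q \<in> gverts A" "n - 1 = prod_encode (encV A p, encV A q)" using Kcar by blast
      show "inv_into (gverts A) (encV A) (snd (prod_decode (n - 1))) \<in> gverts A"
        using pq inv_into_f_f[OF encV_inj'] by simp
    qed
    from cont_via[OF pK pKnz this] show ?thesis unfolding G1_def by (simp add: o_def)
  qed
  have c2: "continuous_map ZZ (discrete_topology (gverts A)) G2"
  proof -
    have "(\<lambda>n. inv_into (gverts A) (encV A) (fst (prod_decode (n - 1)))) \<in> (sg_car (fst Kc) \<inter> {n. n \<noteq> 0}) \<rightarrow> gverts A"
    proof
      fix n assume "n \<in> sg_car (fst Kc) \<inter> {n. n \<noteq> 0}"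
      then obtain p q where pq: "p \<in> gverts A" "q \<in> gverts A" "n - 1 = prod_encode (encV A p, encV A q)" using Kcar by blast
      show "inv_into (gverts A) (encV A) (fst (prod_decode (n - 1))) \<in> gverts A"
        using pq inv_into_f_f[OF encV_inj'] by simp
    qed
    from cont_via[OF pK pKnz this] show ?thesis unfolding G2_def by (simp add: o_def)
  qed
  have c3: "continuous_map ZZ (product_topology (\<lambda>i. discrete_topology (sd_E (fst i))) (idxG (gV V) A)) G3"
    unfolding continuous_map_componentwise
  proof (intro conjI ballI)
    show "G3 ` topspace ZZ \<subseteq> extensional (idxG (gV V) A)" unfolding G3_def by auto
  next
    fix k assume k: "k \<in> idxG (gV V) A"
    have ck: "cdidx A k \<in> idxV V (gedges A)" by (rule cdidx_in[OF pv B2 k])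
    have pk: "continuous_map ZZ (discrete_topology (sg_car (fst (cdidx A k)))) (\<lambda>a. a (cdidx A k))"
      by (rule continuous_map_from_subtopology[OF proj_cont[OF ck]])
    have pknz: "(\<lambda>a. a (cdidx A k)) \<in> topspace ZZ \<rightarrow> {n. n \<noteq> 0}"
    proof
      fix a assume "a \<in> topspace ZZ"
      then have "a \<in> OmegaV V (gedges A)" "a Kc \<noteq> 0" using ZZ_space by auto
      then obtain s where "a (cdidx A k) = Suc s" using W_lemma[OF _ _ k] by blast
      then show "a (cdidx A k) \<in> {n. n \<noteq> 0}" by simp
    qed
    have "(\<lambda>n. n - 1) \<in> (sg_car (fst (cdidx A k)) \<inter> {n. n \<noteq> 0}) \<rightarrow> sd_E (fst k)"
      unfolding cdidx_def by (auto simp: cd_car)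
    from cont_via[OF pk pknz this] show "continuous_map ZZ (discrete_topology (sd_E (fst k))) (\<lambda>x. G3 x k)"
      unfolding G3_def using k by (simp add: o_def)
  qed
  have "continuous_map ZZ (prod_topology (discrete_topology (gverts A))
       (prod_topology (discrete_topology (gverts A))
         (product_topology (\<lambda>i. discrete_topology (sd_E (fst i))) (idxG (gV V) A)))) (gmap (gV V) A)"
    unfolding eq continuous_map_paired using c1 c2 c3 by simp
  moreover have "gmap (gV V) A \<in> topspace ZZ \<rightarrow> EdgesG (gV V) A" using ZZ_space gmap_in by auto
  ultimately show ?thesis unfolding topG_def by (rule continuous_map_into_subtopology)
qed

lemma homeo: "homeomorphic_maps (topG (gV V) A) ZZ \<gamma> (gmap (gV V) A)"
  unfolding homeomorphic_maps_def
proof (intro conjI ballI)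
  show "continuous_map (topG (gV V) A) ZZ \<gamma>"
  proof (rule continuous_map_into_subtopology[OF cont])
    show "\<gamma> \<in> topspace (topG (gV V) A) \<rightarrow> Img" using image_eq unfolding topG_space[of "gV V" A] by blast
  qed
  show "continuous_map ZZ (topG (gV V) A) (gmap (gV V) A)" by (rule g_cont)
next
  fix x assume "x \<in> topspace (topG (gV V) A)"
  then show "gmap (gV V) A (\<gamma> x) = x" using gmap_gamma unfolding topG_space[of "gV V" A] by simp
next
  fix a assume "a \<in> topspace ZZ"
  then show "\<gamma> (gmap (gV V) A a) = a" using gamma_gmap ZZ_space by simp
qed

end

context setting begin

lemma part_fact: "factorial_in (mulV V (gedges A)) (OmegaV V (gedges A)) (\<gamma> ` EdgesG (gV V) A)"
  unfolding factorial_in_def image_eq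
proof (rule conjI)
  show "Img \<subseteq> OmegaV V (gedges A)" by blast
next
  show "\<forall>x\<in>OmegaV V (gedges A). \<forall>y\<in>OmegaV V (gedges A). mulV V (gedges A) x y \<in> Img \<longrightarrow> x \<in> Img \<and> y \<in> Img"
  proof (intro ballI impI)
  fix x y assume x: "x \<in> OmegaV V (gedges A)" and y: "y \<in> OmegaV V (gedges A)" and m: "mulV V (gedges A) x y \<in> Img"
  have "mulV V (gedges A) x y Kc = sg_mul (fst Kc) (x Kc) (y Kc)" unfolding mulV_def using KcJ by simp
  then have "sg_mul (fst Kc) (x Kc) (y Kc) \<noteq> 0" using m by simp
  then have "sg_mul (cd (fst (Kidx A))) (x Kc) (y Kc) \<noteq> 0" unfolding cdidx_def by simp
  then have "x Kc \<noteq> 0 \<and> y Kc \<noteq> 0" by (rule cd_mul_nz)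
  then show "x \<in> Img \<and> y \<in> Img" using x y by simp
  qed
qed

lemma part_emb: "embedding_map (topG (gV V) A) (topV V (gedges A)) \<gamma>"
proof -
  have "homeomorphic_map (topG (gV V) A) ZZ \<gamma>" by (rule homeomorphic_maps_imp_map[OF homeo])
  moreover have "\<gamma> ` topspace (topG (gV V) A) = Img" unfolding topG_space[of "gV V" A] by (rule image_eq)
  ultimately show ?thesis unfolding embedding_map_def by simp
qed

lemma part_open_map: "open_map (topG (gV V) A) (topV V (gedges A)) \<gamma>"
  unfolding open_map_def
proof (intro allI impI)
  fix U assume U: "openin (topG (gV V) A) U"
  have UE: "U \<subseteq> EdgesG (gV V) A" using openin_subset[OF U] unfolding topG_space[of "gV V" A] .
  have eqU: "\<gamma> ` U = {a \<in> topspace ZZ. gmap (gV V) A a \<in> U}"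
  proof
    show "\<gamma> ` U \<subseteq> {a \<in> topspace ZZ. gmap (gV V) A a \<in> U}"
    proof
      fix a assume "a \<in> \<gamma> ` U"
      then obtain x where x: "x \<in> U" "a = \<gamma> x" by blast
      have xE: "x \<in> EdgesG (gV V) A" using x(1) UE by blast
      have "a \<in> Img" using image_eq x(2) xE by blast
      moreover have "gmap (gV V) A a = x" using gmap_gamma[OF xE] x(2) by simp
      ultimately show "a \<in> {a \<in> topspace ZZ. gmap (gV V) A a \<in> U}" using x(1) ZZ_space by simp
    qed
    show "{a \<in> topspace ZZ. gmap (gV V) A a \<in> U} \<subseteq> \<gamma> ` U"
    proof
      fix a assume a: "a \<in> {a \<in> topspace ZZ. gmap (gV V) A a \<in> U}"
      then have "a \<in> Img" using ZZ_space by simp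
      then have "\<gamma> (gmap (gV V) A a) = a" using gamma_gmap by simp
      then show "a \<in> \<gamma> ` U" using a by (intro image_eqI[where x="gmap (gV V) A a"]) simp_all
    qed
  qed
  have "openin ZZ (\<gamma> ` U)" unfolding eqU by (rule openin_continuous_map_preimage[OF g_cont U])
  then show "openin (topV V (gedges A)) (\<gamma> ` U)" using openin_open_subtopology[OF Img_open] by blast
qed

lemma part_mul: "\<forall>x\<in>EdgesG (gV V) A. \<forall>y\<in>EdgesG (gV V) A. \<forall>z\<in>EdgesG (gV V) A.
            mulV V (gedges A) (\<gamma> x) (\<gamma> y) = \<gamma> z \<longrightarrow> e_src x = e_tgt y \<and> mulG (gV V) A x y = z"
proof (intro ballI impI)
  fix x y z assume x: "x \<in> EdgesG (gV V) A" and y: "y \<in> EdgesG (gV V) A" and z: "z \<in> EdgesG (gV V) A"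
    and m: "mulV V (gedges A) (\<gamma> x) (\<gamma> y) = \<gamma> z"
  have "mulV V (gedges A) (\<gamma> x) (\<gamma> y) Kc = sg_mul (fst Kc) (\<gamma> x Kc) (\<gamma> y Kc)"
    unfolding mulV_def using KcJ by simp
  then have "sg_mul (fst Kc) (\<gamma> x Kc) (\<gamma> y Kc) = \<gamma> z Kc" using m by simp
  then have "sg_mul (cd (Kg (encV A ` gverts A))) (Suc (prod_encode (encV A (e_tgt x), encV A (e_src x))))
      (Suc (prod_encode (encV A (e_tgt y), encV A (e_src y)))) \<noteq> 0"
    using gamma_K[OF x] gamma_K[OF y] gamma_K[OF z] unfolding cdidx_def Kidx_def by simp
  then have "encV A (e_src x) = encV A (e_tgt y)" by (simp split: if_splits)
  then have c: "e_src x = e_tgt y" using inj_onD[OF encV_inj'] EdgesG_verts[OF x] EdgesG_verts[OF y] by blast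
  have xy: "mulG (gV V) A x y \<in> EdgesG (gV V) A" by (rule mulG_in[OF pv B2 x y c])
  have "\<gamma> (mulG (gV V) A x y) = \<gamma> z" using hom x y c m by simp
  then have "gmap (gV V) A (\<gamma> (mulG (gV V) A x y)) = gmap (gV V) A (\<gamma> z)" by simp
  then have "mulG (gV V) A x y = z" using gmap_gamma[OF xy] gmap_gamma[OF z] by simp
  then show "e_src x = e_tgt y \<and> mulG (gV V) A x y = z" using c by simp
qed

lemma main:
  shows "openin (topV V (gedges A)) (\<gamma> ` EdgesG (gV V) A)
       \<and> factorial_in (mulV V (gedges A)) (OmegaV V (gedges A)) (\<gamma> ` EdgesG (gV V) A)
       \<and> open_map (topG (gV V) A) (topV V (gedges A)) \<gamma>
       \<and> embedding_map (topG (gV V) A) (topV V (gedges A)) \<gamma>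
       \<and> (\<forall>x\<in>EdgesG (gV V) A. \<forall>y\<in>EdgesG (gV V) A. \<forall>z\<in>EdgesG (gV V) A.
            mulV V (gedges A) (\<gamma> x) (\<gamma> y) = \<gamma> z \<longrightarrow>
            e_src x = e_tgt y \<and> mulG (gV V) A x y = z)"
proof (intro conjI)
  show "openin (topV V (gedges A)) (\<gamma> ` EdgesG (gV V) A)" unfolding image_eq by (rule Img_open)
qed (rule part_fact part_open_map part_emb part_mul)+

end

theorem mainTheorem6:
  fixes A :: "('v, 'e) graph" and V :: "fsg set"
    and \<gamma> :: "('v, 'e) fedge \<Rightarrow> ((fsg \<times> ('e \<Rightarrow> nat)) \<Rightarrow> nat)"
  assumes graph: "is_graph A"
    and finV: "finite (gverts A)"
    and pv: "pv_sg V"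
    and B2: "B2 \<in> V"
    and maps: "\<gamma> \<in> EdgesG (gV V) A \<rightarrow> OmegaV V (gedges A)"
    and cont: "continuous_map (topG (gV V) A) (topV V (gedges A)) \<gamma>"
    and hom: "\<forall>x\<in>EdgesG (gV V) A. \<forall>y\<in>EdgesG (gV V) A. e_src x = e_tgt y \<longrightarrow>
                \<gamma> (mulG (gV V) A x y) = mulV V (gedges A) (\<gamma> x) (\<gamma> y)"
    and gen: "\<forall>e\<in>gedges A. \<gamma> (genG (gV V) A e) = genV V (gedges A) e"
  shows "openin (topV V (gedges A)) (\<gamma> ` EdgesG (gV V) A)
       \<and> factorial_in (mulV V (gedges A)) (OmegaV V (gedges A)) (\<gamma> ` EdgesG (gV V) A)
       \<and> open_map (topG (gV V) A) (topV V (gedges A)) \<gamma>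
       \<and> embedding_map (topG (gV V) A) (topV V (gedges A)) \<gamma>
       \<and> (\<forall>x\<in>EdgesG (gV V) A. \<forall>y\<in>EdgesG (gV V) A. \<forall>z\<in>EdgesG (gV V) A.
            mulV V (gedges A) (\<gamma> x) (\<gamma> y) = \<gamma> z \<longrightarrow>
            e_src x = e_tgt y \<and> mulG (gV V) A x y = z)"
proof -
  interpret setting A V \<gamma> by (rule setting.intro[OF graph finV pv B2 maps cont hom gen])
  show ?thesis by (rule main)
qed

end
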